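(* Let $0<p<+\infty$ and let $L_p=L_p(\Omega,\mathcal{M},\mu)$ be over $\mathbb{R}$ or $\mathbb{C}$, and assume $L_p$ is infinite dimensional. Consider $S_{L_p}=\{f\in L_p:\|f\|=1\}$ with the kernel $k(f,g)=\|f-g\|$. Then $A(S_{L_p})=R(S_{L_p})=\{2^{1/p}\}$.
   Context: Here $\|f\|:=(\int_\Omega|f|^p\,d\mu)^{1/p}$ for all $0<p<\infty$ (functions equal a.e. identified); for $0<p<1$, $L_p$ is a complete metrisable topological vector space with metric $d(f,g)=\int_\Omega|f-g|^p\,d\mu$, and $S_{L_p}$ carries this topology. For a regular Borel probability measure $\nu$ on $S_{L_p}$, $U^\nu(f)=\int\|f-g\|\,d\nu(g)$ and $A(\nu):=[\inf_{S_{L_p}}U^\nu,\sup_{S_{L_p}}U^\nu]$. The average set $A(S_{L_p})$ is the intersection of $A(\nu)$ over all regular Borel probability measures $\nu$ concentrated on $S_{L_p}$, and the rendezvous set $R(S_{L_p})$ is the intersection of $A(\nu)$ over all $\nu=\frac1n\sum_{j=1}^n\delta_{w_j}$, $n\in\mathbb{N}$, $w_j\in S_{L_p}$. *)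

theory Defs
  imports "HOL-Analysis.Analysis" "HOL-Probability.Probability"
begin

text \<open>Scalar field: a type 'b of class real_normed_field + banach (by Gelfand--Mazur this is
  exactly the real or the complex numbers). Elements of L_p are represented by M-measurable
  functions 'a => 'b with integrable p-th power; a.e.-equal representatives are at
  pseudo-distance zero, so all notions below are insensitive to the choice of representatives.\<close>

definition Lp_space :: "'b::{real_normed_field,banach,second_countable_topology} itself \<Rightarrow> 'a measure \<Rightarrow> real \<Rightarrow> ('a \<Rightarrow> 'b::{real_normed_field,banach,second_countable_topology}) set" where
  "Lp_space _ M p = {f. f \<in> borel_measurable M \<and> integrable M (\<lambda>x. norm (f x) powr p)}"

definition Lp_norm :: "'a measure \<Rightarrow> real \<Rightarrow> ('a \<Rightarrow> 'b::{real_normed_field,banach,second_countable_topology}) \<Rightarrow> real" where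
  "Lp_norm M p f = (\<integral>x. norm (f x) powr p \<partial>M) powr (1 / p)"

definition Lp_sphere :: "'b::{real_normed_field,banach,second_countable_topology} itself \<Rightarrow> 'a measure \<Rightarrow> real \<Rightarrow> ('a \<Rightarrow> 'b::{real_normed_field,banach,second_countable_topology}) set" where
  "Lp_sphere B M p = {f \<in> Lp_space B M p. Lp_norm M p f = 1}"

definition Lp_infinite_dim :: "'b::{real_normed_field,banach,second_countable_topology} itself \<Rightarrow> 'a measure \<Rightarrow> real \<Rightarrow> bool" where
  "Lp_infinite_dim B M p \<longleftrightarrow>
     (\<forall>n::nat. \<exists>f :: nat \<Rightarrow> 'a \<Rightarrow> 'b.
        (\<forall>i<n. f i \<in> Lp_space B M p) \<and>
        (\<forall>c :: nat \<Rightarrow> 'b. (AE x in M. (\<Sum>i<n. c i * f i x) = 0) \<longrightarrow> (\<forall>i<n. c i = 0)))"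

text \<open>The topology of S_{L_p}: generated by the balls of the (quasi-)norm; the same topology
  as that of the metric d(f,g) = integral |f-g|^p for p<1, resp. the norm metric for p>=1.\<close>
definition Lp_sphere_top :: "'b::{real_normed_field,banach,second_countable_topology} itself \<Rightarrow> 'a measure \<Rightarrow> real \<Rightarrow> ('a \<Rightarrow> 'b::{real_normed_field,banach,second_countable_topology}) topology" where
  "Lp_sphere_top B M p = topology_generated_by
     {{g \<in> Lp_sphere B M p. Lp_norm M p (f - g) < e} | f e. f \<in> Lp_sphere B M p \<and> e > 0}"

definition regular_borel_prob :: "'b::{real_normed_field,banach,second_countable_topology} itself \<Rightarrow> 'a measure \<Rightarrow> real \<Rightarrow> ('a \<Rightarrow> 'b::{real_normed_field,banach,second_countable_topology}) measure \<Rightarrow> bool" where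
  "regular_borel_prob B M p \<nu> \<longleftrightarrow>
     prob_space \<nu> \<and> space \<nu> = Lp_sphere B M p \<and>
     sets \<nu> = sigma_sets (Lp_sphere B M p) {U. openin (Lp_sphere_top B M p) U} \<and>
     (\<forall>X \<in> sets \<nu>.
        measure \<nu> X = Sup {measure \<nu> K | K. compactin (Lp_sphere_top B M p) K \<and> K \<subseteq> X} \<and>
        measure \<nu> X = Inf {measure \<nu> U | U. openin (Lp_sphere_top B M p) U \<and> X \<subseteq> U})"

definition potential :: "'a measure \<Rightarrow> real \<Rightarrow> ('a \<Rightarrow> 'b::{real_normed_field,banach,second_countable_topology}) measure \<Rightarrow> ('a \<Rightarrow> 'b) \<Rightarrow> real" where
  "potential M p \<nu> f = (\<integral>g. Lp_norm M p (f - g) \<partial>\<nu>)"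

definition avg_interval :: "'b::{real_normed_field,banach,second_countable_topology} itself \<Rightarrow> 'a measure \<Rightarrow> real \<Rightarrow> (('a \<Rightarrow> 'b::{real_normed_field,banach,second_countable_topology}) \<Rightarrow> real) \<Rightarrow> real set" where
  "avg_interval B M p U = {Inf (U ` Lp_sphere B M p) .. Sup (U ` Lp_sphere B M p)}"

definition average_set :: "'b::{real_normed_field,banach,second_countable_topology} itself \<Rightarrow> 'a measure \<Rightarrow> real \<Rightarrow> real set" where
  "average_set B M p =
     \<Inter> {avg_interval B M p (potential M p \<nu>) | \<nu>. regular_borel_prob B M p \<nu>}"

text \<open>Rendezvous set R(S_{L_p}): nu = (1/n) sum_j delta_{w_j}; its potential is written out.\<close>
definition rendezvous_set :: "'b::{real_normed_field,banach,second_countable_topology} itself \<Rightarrow> 'a measure \<Rightarrow> real \<Rightarrow> real set" where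
  "rendezvous_set B M p =
     \<Inter> {avg_interval B M p (\<lambda>f. (\<Sum>j<n. Lp_norm M p (f - w j)) / real n) | n w.
           n \<ge> 1 \<and> (\<forall>j<n. w j \<in> Lp_sphere B M p)}"

end

theory Submission
  imports Defs
begin
lemma qt_real:
  fixes p \<eta> :: real
  assumes p: "0 < p" and eta: "0 < \<eta>"
  shows "\<exists>C>0. \<forall>x y::real. 0 \<le> x \<longrightarrow> 0 \<le> y \<longrightarrow>
            (x + y) powr p \<le> (1 + \<eta>) * x powr p + C * y powr p"
proof -
  define \<delta> where "\<delta> = (1 + \<eta>) powr (1 / p) - 1"
  have "1 < (1 + \<eta>) powr (1 / p)"
    using p eta by (simp add: gr_one_powr)
  hence d: "0 < \<delta>" by (simp add: \<delta>_def)
  have dp: "(1 + \<delta>) powr p = 1 + \<eta>"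
    using p eta by (simp add: \<delta>_def powr_powr)
  define C where "C = (1 + 1 / \<delta>) powr p"
  have "0 < 1 + 1 / \<delta>" using d by (smt (verit) divide_pos_pos)
  hence C: "0 < C" by (simp add: C_def)
  show ?thesis
  proof (intro exI[of _ C] conjI allI impI C)
    fix x y :: real assume x: "0 \<le> x" and y: "0 \<le> y"
    show "(x + y) powr p \<le> (1 + \<eta>) * x powr p + C * y powr p"
    proof (cases "y \<le> \<delta> * x")
      case True
      have "(x + y) powr p \<le> ((1 + \<delta>) * x) powr p"
        using True x y p by (intro powr_mono2) (auto simp: algebra_simps)
      also have "\<dots> = (1 + \<eta>) * x powr p"
        using d x by (simp add: powr_mult dp)
      finally show ?thesis using C by (smt (verit) mult_nonneg_nonneg powr_ge_zero)
    next
      case False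
      hence "x \<le> y / \<delta>" using d by (simp add: field_simps)
      hence "x + y \<le> (1 + 1 / \<delta>) * y" by (simp add: algebra_simps)
      hence "(x + y) powr p \<le> ((1 + 1 / \<delta>) * y) powr p"
        using x y p by (intro powr_mono2) auto
      also have "\<dots> = C * y powr p"
        using d y by (simp add: powr_mult C_def)
      finally show ?thesis using eta x
        by (smt (verit) mult_nonneg_nonneg powr_ge_zero)
    qed
  qed
qed

definition PN :: "'a measure \<Rightarrow> real \<Rightarrow> ('a \<Rightarrow> 'b::{real_normed_field,banach,second_countable_topology}) \<Rightarrow> real" where
  "PN M p f = (\<integral>x. norm (f x) powr p \<partial>M)"

lemma Lp_norm_PN: "Lp_norm M p f = PN M p f powr (1 / p)"
  by (simp add: Lp_norm_def PN_def)

lemma PN_nonneg: "0 \<le> PN M p f"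
  unfolding PN_def by (intro integral_nonneg_AE) auto

lemma PN_from_norm: assumes "0 < p" shows "PN M p f = Lp_norm M p f powr p"
  using assms PN_nonneg[of M p f] by (simp add: Lp_norm_PN powr_powr)

lemma Lp_norm_nonneg: "0 \<le> Lp_norm M p f"
  by (simp add: Lp_norm_PN)

lemma sphere_iff:
  assumes "0 < p"
  shows "f \<in> Lp_sphere B M p \<longleftrightarrow> f \<in> Lp_space B M p \<and> PN M p f = 1"
proof -
  have "PN M p f powr (1/p) = 1 \<longleftrightarrow> PN M p f = 1"
  proof
    assume h: "PN M p f powr (1/p) = 1"
    have "PN M p f = (PN M p f powr (1/p)) powr p"
      using assms PN_nonneg[of M p f] by (simp add: powr_powr)
    also have "\<dots> = 1" using h by simp
    finally show "PN M p f = 1" .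
  qed simp
  thus ?thesis by (simp add: Lp_sphere_def Lp_norm_PN)
qed

lemma Lp_spaceD:
  assumes "f \<in> Lp_space B M p"
  shows "f \<in> borel_measurable M" "integrable M (\<lambda>x. norm (f x) powr p)"
  using assms by (auto simp: Lp_space_def)

lemma pw_qt:
  fixes a b c :: "'b::real_normed_vector"
  assumes p: "0 < p" and C: "\<forall>x y::real. 0 \<le> x \<longrightarrow> 0 \<le> y \<longrightarrow> (x + y) powr p \<le> (1 + \<eta>) * x powr p + C * y powr p"
  shows "norm (a - b) powr p \<le> (1 + \<eta>) * norm (a - c) powr p + C * norm (c - b) powr p"
proof -
  have "norm (a - b) \<le> norm (a - c) + norm (c - b)"
    by (metis norm_diff_triangle_ineq diff_add_cancel add_diff_eq norm_triangle_ineq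
          diff_diff_eq2)
  hence "norm (a - b) powr p \<le> (norm (a - c) + norm (c - b)) powr p"
    using p by (intro powr_mono2) auto
  also have "\<dots> \<le> (1 + \<eta>) * norm (a - c) powr p + C * norm (c - b) powr p"
    using C by auto
  finally show ?thesis .
qed

lemma Lp_diff:
  assumes p: "0 < p" and f: "f \<in> Lp_space B M p" and g: "g \<in> Lp_space B M p"
  shows "(\<lambda>x. f x - g x) \<in> Lp_space B M p"
proof -
  obtain C where C: "C > 0" "\<forall>x y::real. 0 \<le> x \<longrightarrow> 0 \<le> y \<longrightarrow> (x + y) powr p \<le> (1 + 1) * x powr p + C * y powr p"
    using qt_real[OF p, of 1] by auto
  have m: "(\<lambda>x. f x - g x) \<in> borel_measurable M"
    using f g by (auto simp: Lp_space_def)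
  have "integrable M (\<lambda>x. (1 + 1) * norm (f x) powr p + C * norm (g x) powr p)"
    using f g by (auto simp: Lp_space_def)
  moreover have mm: "(\<lambda>x. norm (f x - g x) powr p) \<in> borel_measurable M" using m by measurable
  moreover have "AE x in M. norm (norm (f x - g x) powr p) \<le> norm ((1 + 1) * norm (f x) powr p + C * norm (g x) powr p)"
  proof (intro AE_I2)
    fix x
    have "norm (f x - g x) powr p \<le> (1 + 1) * norm (f x - 0) powr p + C * norm (0 - g x) powr p"
      by (rule pw_qt[OF p C(2)])
    thus "norm (norm (f x - g x) powr p) \<le> norm ((1 + 1) * norm (f x) powr p + C * norm (g x) powr p)"
      using C by simp
  qed
  ultimately have "integrable M (\<lambda>x. norm (f x - g x) powr p)"
    by (rule Bochner_Integration.integrable_bound)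
  thus ?thesis using m by (simp add: Lp_space_def)
qed

lemma Lp_diff': 
  assumes "0 < p" "f \<in> Lp_space B M p" "g \<in> Lp_space B M p"
  shows "f - g \<in> Lp_space B M p"
  using Lp_diff[OF assms] by (simp add: fun_diff_def)

lemma zero_Lp: "(\<lambda>x. 0) \<in> Lp_space B M p"
  by (simp add: Lp_space_def)

lemma integrable_ind:
  fixes f :: "'a \<Rightarrow> real"
  shows "A \<in> sets M \<Longrightarrow> integrable M f \<Longrightarrow> integrable M (\<lambda>x. indicator A x * f x)"
  using integrable_mult_indicator[of A M f] by simp

lemma Lp_int_diff:
  assumes "0 < p" "a \<in> Lp_space B M p" "b \<in> Lp_space B M p" "A \<in> sets M"
  shows "integrable M (\<lambda>x. indicator A x * norm (a x - b x) powr p)"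
  using Lp_diff[OF assms(1-3)] assms(4)
  by (intro integrable_ind) (auto simp: Lp_space_def)

lemma int_qt:
  assumes p: "0 < p" and C: "\<forall>x y::real. 0 \<le> x \<longrightarrow> 0 \<le> y \<longrightarrow> (x + y) powr p \<le> (1 + \<eta>) * x powr p + C * y powr p"
    and A: "A \<in> sets M"
    and a: "a \<in> Lp_space B M p" and b: "b \<in> Lp_space B M p" and c: "c \<in> Lp_space B M p"
  shows "(\<integral>x. indicator A x * norm (a x - b x) powr p \<partial>M) \<le>
     (1 + \<eta>) * (\<integral>x. indicator A x * norm (a x - c x) powr p \<partial>M) + C * (\<integral>x. indicator A x * norm (c x - b x) powr p \<partial>M)"
proof -
  have "(\<integral>x. indicator A x * norm (a x - b x) powr p \<partial>M) \<le>
     (\<integral>x. (1 + \<eta>) * (indicator A x * norm (a x - c x) powr p) + C * (indicator A x * norm (c x - b x) powr p) \<partial>M)"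
  proof (rule integral_mono)
    show "integrable M (\<lambda>x. indicator A x * norm (a x - b x) powr p)"
      by (rule Lp_int_diff[OF p a b A])
    show "integrable M (\<lambda>x. (1 + \<eta>) * (indicator A x * norm (a x - c x) powr p) + C * (indicator A x * norm (c x - b x) powr p))"
      using Lp_int_diff[OF p a c A] Lp_int_diff[OF p c b A] by auto
    fix x
    show "indicator A x * norm (a x - b x) powr p \<le> (1 + \<eta>) * (indicator A x * norm (a x - c x) powr p) + C * (indicator A x * norm (c x - b x) powr p)"
      using pw_qt[OF p C, of "a x" "b x" "c x"] by (auto simp: indicator_def)
  qed
  also have "\<dots> = (1 + \<eta>) * (\<integral>x. indicator A x * norm (a x - c x) powr p \<partial>M) + C * (\<integral>x. indicator A x * norm (c x - b x) powr p \<partial>M)"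
    using Lp_int_diff[OF p a c A] Lp_int_diff[OF p c b A] by simp
  finally show ?thesis .
qed

lemma int_split:
  fixes F :: "'a \<Rightarrow> real"
  assumes F: "integrable M F" and A: "A \<in> sets M"
  shows "integral\<^sup>L M F = (\<integral>x. indicator A x * F x \<partial>M) + (\<integral>x. indicator (space M - A) x * F x \<partial>M)"
proof -
  have "integral\<^sup>L M F = (\<integral>x. indicator A x * F x + indicator (space M - A) x * F x \<partial>M)"
    by (intro Bochner_Integration.integral_cong) (auto simp: indicator_def)
  also have "\<dots> = (\<integral>x. indicator A x * F x \<partial>M) + (\<integral>x. indicator (space M - A) x * F x \<partial>M)"
    using F A by (intro Bochner_Integration.integral_add integrable_ind) auto
  finally show ?thesis .
qed

lemma sum_indicator_le1:
  fixes A :: "nat \<Rightarrow> 'a set"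
  assumes "\<forall>i<N. \<forall>j<N. i \<noteq> j \<longrightarrow> A i \<inter> A j = {}"
  shows "(\<Sum>j<N. indicator (A j) x :: real) \<le> 1"
proof (cases "\<exists>j<N. x \<in> A j")
  case True
  then obtain j where j: "j < N" "x \<in> A j" by auto
  have "(\<Sum>j<N. indicator (A j) x :: real) = indicator (A j) x + (\<Sum>i\<in>{..<N} - {j}. indicator (A i) x)"
    using j by (subst sum.remove[OF finite_lessThan, of j]) auto
  also have "(\<Sum>i\<in>{..<N} - {j}. indicator (A i) x :: real) = 0"
    using assms j by (intro sum.neutral) (auto simp: indicator_def)
  finally show ?thesis using j by simp
next
  case False
  thus ?thesis by (simp add: indicator_def)
qed

locale disj_fam =
  fixes B :: "'b::{real_normed_field,banach,second_countable_topology} itself"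
    and M :: "'a measure" and p :: real and N :: nat and w :: "nat \<Rightarrow> 'a \<Rightarrow> 'b" and A :: "nat \<Rightarrow> 'a set"
  assumes p: "0 < p"
    and w: "\<forall>j<N. w j \<in> Lp_sphere B M p"
    and A: "\<forall>j<N. A j \<in> sets M"
    and disj: "\<forall>i<N. \<forall>j<N. i \<noteq> j \<longrightarrow> A i \<inter> A j = {}"
    and supp: "\<forall>j<N. \<forall>x\<in>space M. x \<notin> A j \<longrightarrow> w j x = 0"
begin

lemma wL: "j < N \<Longrightarrow> w j \<in> Lp_space B M p" and wP: "j < N \<Longrightarrow> PN M p (w j) = 1"
  using w sphere_iff[OF p] by auto

lemma sum_a:
  assumes g: "g \<in> Lp_sphere B M p"
  shows "(\<Sum>j<N. \<integral>x. indicator (A j) x * norm (g x) powr p \<partial>M) \<le> 1"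
proof -
  have gL: "g \<in> Lp_space B M p" and gP: "PN M p g = 1" using g sphere_iff[OF p] by auto
  have I: "integrable M (\<lambda>x. norm (g x) powr p)" using gL by (simp add: Lp_space_def)
  have "(\<Sum>j<N. \<integral>x. indicator (A j) x * norm (g x) powr p \<partial>M) = (\<integral>x. (\<Sum>j<N. indicator (A j) x * norm (g x) powr p) \<partial>M)"
    using I A by (subst Bochner_Integration.integral_sum) (auto intro!: integrable_ind)
  also have "\<dots> \<le> (\<integral>x. norm (g x) powr p \<partial>M)"
  proof (rule integral_mono)
    show "integrable M (\<lambda>x. \<Sum>j<N. indicator (A j) x * norm (g x) powr p)"
      using I A by (intro Bochner_Integration.integrable_sum integrable_ind) auto
    show "integrable M (\<lambda>x. norm (g x) powr p)" by (rule I)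
    fix x
    have "(\<Sum>j<N. indicator (A j) x * norm (g x) powr p) = (\<Sum>j<N. indicator (A j) x :: real) * norm (g x) powr p"
      by (simp add: sum_distrib_right)
    also have "\<dots> \<le> 1 * norm (g x) powr p"
      using sum_indicator_le1[OF disj, of x] by (intro mult_right_mono) auto
    finally show "(\<Sum>j<N. indicator (A j) x * norm (g x) powr p) \<le> norm (g x) powr p" by simp
  qed
  also have "\<dots> = 1" using gP by (simp add: PN_def)
  finally show ?thesis .
qed

lemma PN_est:
  assumes g: "g \<in> Lp_sphere B M p" and j: "j < N" and eta: "0 < \<eta>" and C0: "0 \<le> C"
    and C: "\<forall>x y::real. 0 \<le> x \<longrightarrow> 0 \<le> y \<longrightarrow> (x + y) powr p \<le> (1 + \<eta>) * x powr p + C * y powr p"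
  shows "\<bar>PN M p (g - w j) - 2\<bar> \<le> \<eta> + (C + 1) * (\<integral>x. indicator (A j) x * norm (g x) powr p \<partial>M)"
proof -
  have gL: "g \<in> Lp_space B M p" and gP: "PN M p g = 1" using g sphere_iff[OF p] by auto
  have wjL: "w j \<in> Lp_space B M p" and wjP: "PN M p (w j) = 1" using wL wP j by auto
  have Aj: "A j \<in> sets M" using A j by auto
  define a where "a = (\<integral>x. indicator (A j) x * norm (g x) powr p \<partial>M)"
  define I where "I = (\<integral>x. indicator (A j) x * norm (g x - w j x) powr p \<partial>M)"
  have a0: "0 \<le> a" unfolding a_def by (intro integral_nonneg_AE) (auto simp: indicator_def)
  have Ig: "integrable M (\<lambda>x. norm (g x) powr p)" using gL by (simp add: Lp_space_def)
  have Igw: "integrable M (\<lambda>x. norm (g x - w j x) powr p)"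
    using Lp_diff[OF p gL wjL] by (simp add: Lp_space_def)
  have g_split: "1 = a + (\<integral>x. indicator (space M - A j) x * norm (g x) powr p \<partial>M)"
    using int_split[OF Ig Aj] gP by (simp add: PN_def a_def)
  have "PN M p (g - w j) = I + (\<integral>x. indicator (space M - A j) x * norm (g x - w j x) powr p \<partial>M)"
    using int_split[OF Igw Aj] by (simp add: PN_def I_def)
  also have "(\<integral>x. indicator (space M - A j) x * norm (g x - w j x) powr p \<partial>M) =
             (\<integral>x. indicator (space M - A j) x * norm (g x) powr p \<partial>M)"
  proof (rule Bochner_Integration.integral_cong[OF refl])
    fix x assume "x \<in> space M"
    thus "indicator (space M - A j) x * norm (g x - w j x) powr p = indicator (space M - A j) x * norm (g x) powr p"
      using supp j by (cases "x \<in> A j") (auto simp: indicator_def)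
  qed
  finally have PNe: "PN M p (g - w j) = I + 1 - a" using g_split by (simp add: fun_diff_def)
  have wA: "(\<integral>x. indicator (A j) x * norm (w j x - 0) powr p \<partial>M) = 1"
  proof -
    have "(\<integral>x. indicator (A j) x * norm (w j x - 0) powr p \<partial>M) = (\<integral>x. norm (w j x) powr p \<partial>M)"
      using supp j p by (intro Bochner_Integration.integral_cong) (auto simp: indicator_def)
    thus ?thesis using wjP by (simp add: PN_def)
  qed
  have up: "I \<le> (1 + \<eta>) * 1 + C * a"
  proof -
    have "(\<integral>x. indicator (A j) x * norm (w j x - g x) powr p \<partial>M) \<le> (1 + \<eta>) * (\<integral>x. indicator (A j) x * norm (w j x - (\<lambda>x. 0) x) powr p \<partial>M) + C * (\<integral>x. indicator (A j) x * norm ((\<lambda>x. 0) x - g x) powr p \<partial>M)"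
      using int_qt[OF p C Aj, where a="w j" and b=g and c="\<lambda>x. 0"] gL wjL zero_Lp by blast
    moreover have "(\<integral>x. indicator (A j) x * norm (w j x - g x) powr p \<partial>M) = I"
      unfolding I_def by (simp add: norm_minus_commute)
    ultimately show ?thesis using wA by (simp add: a_def)
  qed
  have low: "1 \<le> (1 + \<eta>) * I + C * a"
  proof -
    have "(\<integral>x. indicator (A j) x * norm (w j x - (\<lambda>x. 0) x) powr p \<partial>M) \<le> (1 + \<eta>) * (\<integral>x. indicator (A j) x * norm (w j x - g x) powr p \<partial>M) + C * (\<integral>x. indicator (A j) x * norm (g x - (\<lambda>x. 0) x) powr p \<partial>M)"
      using int_qt[OF p C Aj, where a="w j" and b="\<lambda>x. 0" and c=g] gL wjL zero_Lp by blast
    moreover have "(\<integral>x. indicator (A j) x * norm (w j x - g x) powr p \<partial>M) = I"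
      unfolding I_def by (simp add: norm_minus_commute)
    ultimately show ?thesis using wA by (simp add: a_def)
  qed
  have Ilow: "I \<ge> 1 - \<eta> - C * a"
  proof (rule ccontr)
    assume "\<not> ?thesis"
    hence "I < 1 - \<eta> - C * a" by simp
    hence "(1 + \<eta>) * I < (1 + \<eta>) * (1 - \<eta> - C * a)" using eta by (intro mult_strict_left_mono) auto
    also have "\<dots> = 1 - C * a - \<eta> * \<eta> - \<eta> * (C * a)" by (simp add: algebra_simps)
    also have "\<dots> \<le> 1 - C * a"
    proof -
      have "0 \<le> \<eta> * \<eta>" "0 \<le> \<eta> * (C * a)" using eta C0 a0 by auto
      thus ?thesis by linarith
    qed
    finally show False using low by simp
  qed
  show ?thesis using PNe up Ilow a0 C0 unfolding a_def[symmetric] by (simp add: abs_le_iff algebra_simps)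
qed

end

lemma PN_qt:
  assumes p: "0 < p" and C: "\<forall>x y::real. 0 \<le> x \<longrightarrow> 0 \<le> y \<longrightarrow> (x + y) powr p \<le> (1 + \<eta>) * x powr p + C * y powr p"
    and a: "a \<in> Lp_space B M p" and b: "b \<in> Lp_space B M p" and c: "c \<in> Lp_space B M p"
  shows "PN M p (a - b) \<le> (1 + \<eta>) * PN M p (a - c) + C * PN M p (c - b)"
proof -
  have e: "\<And>u v. (\<integral>x. indicator (space M) x * norm (u x - v x) powr p \<partial>M) = PN M p (u - v)"
    unfolding PN_def by (rule Bochner_Integration.integral_cong) (auto simp: indicator_def)
  show ?thesis using int_qt[OF p C sets.top a b c] unfolding e .
qed

lemma powr_cont_at2:
  assumes p: "0 < p" and e: "0 < e"
  shows "\<exists>\<delta>>0. \<forall>t::real. \<bar>t - 2\<bar> < \<delta> \<longrightarrow> \<bar>t powr (1/p) - 2 powr (1/p)\<bar> < e"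
proof -
  have "((\<lambda>t::real. t powr (1/p)) \<longlongrightarrow> 2 powr (1/p)) (at 2)"
    by (intro tendsto_powr tendsto_ident_at tendsto_const) auto
  from LIM_D[OF this e] obtain s where s: "s > 0" "\<forall>x. x \<noteq> 2 \<and> norm (x - 2) < s \<longrightarrow> norm (x powr (1/p) - 2 powr (1/p)) < e"
    by auto
  show ?thesis
  proof (intro exI[of _ s] conjI allI impI s(1))
    fix t :: real assume "\<bar>t - 2\<bar> < s"
    thus "\<bar>t powr (1/p) - 2 powr (1/p)\<bar> < e"
      using s(2) e by (cases "t = 2") auto
  qed
qed

lemma Lp_norm_bound:
  assumes p: "0 < p"
  shows "\<exists>Bd. \<forall>f\<in>Lp_sphere B M p. \<forall>g\<in>Lp_sphere B M p. Lp_norm M p (f - g) \<le> Bd \<and> PN M p (f - g) \<le> Bd"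
proof -
  obtain C where C: "C > 0" "\<forall>x y::real. 0 \<le> x \<longrightarrow> 0 \<le> y \<longrightarrow> (x + y) powr p \<le> (1 + 1) * x powr p + C * y powr p"
    using qt_real[OF p, of 1] by auto
  have "\<forall>f\<in>Lp_sphere B M p. \<forall>g\<in>Lp_sphere B M p. Lp_norm M p (f - g) \<le> (2 + C) powr (1/p) \<and> PN M p (f - g) \<le> 2 + C"
  proof (intro ballI)
    fix f g assume f: "f \<in> Lp_sphere B M p" and g: "g \<in> Lp_sphere B M p"
    have fL: "f \<in> Lp_space B M p" "PN M p f = 1" and gL: "g \<in> Lp_space B M p" "PN M p g = 1"
      using f g sphere_iff[OF p] by auto
    have "PN M p (f - g) \<le> (1 + 1) * PN M p (f - (\<lambda>x. 0)) + C * PN M p ((\<lambda>x. 0) - g)"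
      by (rule PN_qt[OF p C(2) fL(1) gL(1) zero_Lp])
    also have "PN M p (f - (\<lambda>x. 0)) = 1" using fL by (simp add: fun_diff_def)
    also have "PN M p ((\<lambda>x. 0) - g) = 1" using gL by (simp add: fun_diff_def PN_def)
    finally have P: "PN M p (f - g) \<le> 2 + C" by (simp add: fun_diff_def)
    moreover have "Lp_norm M p (f - g) \<le> (2 + C) powr (1/p)"
      unfolding Lp_norm_PN using P p PN_nonneg by (intro powr_mono2) auto
    ultimately show "Lp_norm M p (f - g) \<le> (2 + C) powr (1/p) \<and> PN M p (f - g) \<le> 2 + C" by simp
  qed
  thus ?thesis by (intro exI[of _ "max ((2 + C) powr (1/p)) (2 + C)"]) force
qed

lemma key:
  assumes p: "0 < p" and fam: "\<forall>N. \<exists>w A. disj_fam B M p N w A" and e: "0 < e"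
  shows "\<exists>N w. N \<ge> 1 \<and> (\<forall>j<N. w j \<in> Lp_sphere B M p) \<and>
     (\<forall>g\<in>Lp_sphere B M p. \<bar>(\<Sum>j<N. Lp_norm M p (g - w j)) / real N - 2 powr (1/p)\<bar> \<le> e)"
proof -
  define c where "c = (2::real) powr (1/p)"
  obtain Bd where Bd: "\<forall>f\<in>Lp_sphere B M p. \<forall>g\<in>Lp_sphere B M p. Lp_norm M p (f - g) \<le> Bd \<and> PN M p (f - g) \<le> Bd"
    using Lp_norm_bound[OF p] by blast
  obtain \<delta> where d: "\<delta> > 0" "\<forall>t::real. \<bar>t - 2\<bar> < \<delta> \<longrightarrow> \<bar>t powr (1/p) - c\<bar> < e/2"
    using powr_cont_at2[OF p, of "e/2"] e unfolding c_def by auto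
  define \<eta> where "\<eta> = \<delta> / 2"
  have eta: "\<eta> > 0" using d by (simp add: \<eta>_def)
  obtain C where C: "C > 0" "\<forall>x y::real. 0 \<le> x \<longrightarrow> 0 \<le> y \<longrightarrow> (x + y) powr p \<le> (1 + \<eta>) * x powr p + C * y powr p"
    using qt_real[OF p eta] by auto
  define \<delta>' where "\<delta>' = \<delta> / (2 * (C + 1))"
  have d': "\<delta>' > 0" using d C by (simp add: \<delta>'_def)
  define K where "K = \<bar>Bd\<bar> + c"
  have c0: "c \<ge> 0" by (simp add: c_def)
  have K0: "K \<ge> 0" using c0 by (simp add: K_def)
  define N where "N = nat \<lceil>K / (\<delta>' * (e/2))\<rceil> + 1"
  have N1: "N \<ge> 1" by (simp add: N_def)
  have NK: "K / (\<delta>' * (e/2)) \<le> real N"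
  proof -
    have "K / (\<delta>' * (e/2)) \<le> real (nat \<lceil>K / (\<delta>' * (e/2))\<rceil>)" by (rule real_nat_ceiling_ge)
    thus ?thesis unfolding N_def by simp
  qed
  obtain w A where fa: "disj_fam B M p N w A" using fam by blast
  interpret disj_fam B M p N w A by (rule fa)
  show ?thesis
  proof (intro exI[of _ N] exI[of _ w] conjI N1 ballI)
    show "\<forall>j<N. w j \<in> Lp_sphere B M p" using w .
    fix g assume g: "g \<in> Lp_sphere B M p"
    define a where "a j = (\<integral>x. indicator (A j) x * norm (g x) powr p \<partial>M)" for j
    have a0: "0 \<le> a j" for j unfolding a_def by (intro integral_nonneg_AE) (auto simp: indicator_def)
    have sa: "(\<Sum>j<N. a j) \<le> 1" using sum_a[OF g] by (simp add: a_def)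
    define Bad where "Bad = {j. j < N \<and> \<delta>' \<le> a j}"
    have finB: "finite Bad" by (simp add: Bad_def)
    have "card Bad * \<delta>' = (\<Sum>j\<in>Bad. \<delta>')" by simp
    also have "\<dots> \<le> (\<Sum>j\<in>Bad. a j)" by (intro sum_mono) (simp add: Bad_def)
    also have "\<dots> \<le> (\<Sum>j<N. a j)" using a0 by (intro sum_mono2) (auto simp: Bad_def)
    finally have cB: "card Bad * \<delta>' \<le> 1" using sa by simp
    have each: "\<bar>Lp_norm M p (g - w j) - c\<bar> \<le> e/2 + (if j \<in> Bad then K else 0)" if j: "j < N" for j
    proof (cases "j \<in> Bad")
      case True
      have "0 \<le> Lp_norm M p (g - w j)" "Lp_norm M p (g - w j) \<le> Bd" using Bd g w j Lp_norm_nonneg by auto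
      thus ?thesis using True e c0 by (simp add: K_def)
    next
      case False
      hence aj: "a j < \<delta>'" using j by (simp add: Bad_def)
      have "\<bar>PN M p (g - w j) - 2\<bar> \<le> \<eta> + (C + 1) * a j"
        using PN_est[OF g j eta _ C(2)] C(1) by (simp add: a_def)
      also have "\<dots> < \<eta> + (C + 1) * \<delta>'" using aj C(1) by simp
      also have "\<dots> = \<delta>" using C(1) by (simp add: \<eta>_def \<delta>'_def field_simps)
      finally have "\<bar>PN M p (g - w j) - 2\<bar> < \<delta>" .
      hence "\<bar>Lp_norm M p (g - w j) - c\<bar> < e/2" using d(2) by (simp add: Lp_norm_PN)
      thus ?thesis using False by simp
    qed
    have "\<bar>(\<Sum>j<N. Lp_norm M p (g - w j)) / real N - c\<bar> = \<bar>\<Sum>j<N. (Lp_norm M p (g - w j) - c)\<bar> / real N"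
      using N1 by (simp add: sum_subtractf field_simps)
    also have "\<dots> \<le> (\<Sum>j<N. \<bar>Lp_norm M p (g - w j) - c\<bar>) / real N"
      using N1 by (intro divide_right_mono sum_abs) auto
    also have "\<dots> \<le> (\<Sum>j<N. e/2 + (if j \<in> Bad then K else 0)) / real N"
      using N1 each by (intro divide_right_mono sum_mono) auto
    also have "(\<Sum>j<N. e/2 + (if j \<in> Bad then K else 0)) = N * (e/2) + card Bad * K"
    proof -
      have "(\<Sum>j<N. (if j \<in> Bad then K else 0)) = (\<Sum>j\<in>Bad. K)"
      proof -
        have "{..<N} \<inter> Bad = Bad" by (auto simp: Bad_def)
        thus ?thesis by (subst sum.If_cases) auto
      qed
      thus ?thesis by (simp add: sum.distrib)
    qed
    also have "(N * (e/2) + card Bad * K) / real N = e/2 + card Bad * K / N"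
      using N1 by (simp add: field_simps)
    also have "card Bad * K / N \<le> e/2"
    proof -
      have "card Bad * K \<le> K / \<delta>'"
        using cB d' K0 mult_left_mono[of "\<delta>' * real (card Bad)" 1 K] by (simp add: field_simps)
      also have "\<dots> \<le> real N * (e/2)"
        using NK d' e by (simp add: field_simps)
      finally show ?thesis using N1 by (simp add: field_simps)
    qed
    finally show "\<bar>(\<Sum>j<N. Lp_norm M p (g - w j)) / real N - 2 powr (1/p)\<bar> \<le> e"
      unfolding c_def by (simp add: fun_diff_def)
  qed
qed

lemma Lp_norm_commute: "Lp_norm M p (f - g) = Lp_norm M p (g - f)"
  by (simp add: Lp_norm_def norm_minus_commute)

lemma avg_close:
  fixes T :: "nat \<Rightarrow> real"
  assumes n: "n \<ge> 1" and T: "\<forall>j<n. \<bar>T j - c\<bar> \<le> e"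
  shows "\<bar>(\<Sum>j<n. T j) / real n - c\<bar> \<le> e"
proof -
  have "\<bar>(\<Sum>j<n. T j) / real n - c\<bar> = \<bar>\<Sum>j<n. (T j - c)\<bar> / real n"
    using n by (simp add: sum_subtractf field_simps)
  also have "\<dots> \<le> (\<Sum>j<n. \<bar>T j - c\<bar>) / real n"
    using n by (intro divide_right_mono sum_abs) auto
  also have "\<dots> \<le> (\<Sum>j<n. e) / real n"
    using n T by (intro divide_right_mono sum_mono) auto
  also have "\<dots> = e" using n by simp
  finally show ?thesis .
qed

lemma exists_le_avg:
  fixes V :: "nat \<Rightarrow> real"
  assumes N: "N \<ge> 1" and avg: "(\<Sum>k<N. V k) / real N \<le> t"
  shows "\<exists>k<N. V k \<le> t"
proof (rule ccontr)
  assume "\<not> ?thesis"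
  hence lt: "\<forall>k<N. t < V k" by auto
  have "0 \<in> {..<N}" using N by simp
  hence ne: "{..<N} \<noteq> {}" by blast
  have "(\<Sum>k<N. t) < (\<Sum>k<N. V k)"
    by (rule sum_strict_mono[OF finite_lessThan ne]) (use lt in auto)
  hence "real N * t < (\<Sum>k<N. V k)" by simp
  moreover have "real N > 0" using N by simp
  ultimately have "t < (\<Sum>k<N. V k) / real N" by (simp add: field_simps)
  thus False using avg by linarith
qed

lemma exists_ge_avg:
  fixes V :: "nat \<Rightarrow> real"
  assumes N: "N \<ge> 1" and avg: "t \<le> (\<Sum>k<N. V k) / real N"
  shows "\<exists>k<N. t \<le> V k"
proof -
  have "(\<Sum>k<N. - V k) / real N \<le> - t" using avg by (simp add: sum_negf)
  from exists_le_avg[OF N this] show ?thesis by auto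
qed

lemma in_interval:
  fixes V :: "'x \<Rightarrow> real"
  assumes bd: "\<forall>f\<in>S. 0 \<le> V f \<and> V f \<le> Bd"
    and approx: "\<forall>e>0. \<exists>N u. N \<ge> 1 \<and> (\<forall>k<N. u k \<in> S) \<and> \<bar>(\<Sum>k<N. V (u k)) / real N - c\<bar> \<le> e"
  shows "c \<in> {Inf (V ` S) .. Sup (V ` S)}"
proof -
  have bb: "bdd_below (V ` S)" using bd by (intro bdd_belowI2[of _ 0]) auto
  have ba: "bdd_above (V ` S)" using bd by (intro bdd_aboveI2[of _ _ Bd]) auto
  have lo: "Inf (V ` S) \<le> c + e" if e: "0 < e" for e
  proof -
    obtain N u where N: "N \<ge> 1" "\<forall>k<N. u k \<in> S" "\<bar>(\<Sum>k<N. V (u k)) / real N - c\<bar> \<le> e"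
      using approx e by blast
    have "(\<Sum>k<N. V (u k)) / real N \<le> c + e" using N(3) by linarith
    from exists_le_avg[OF N(1) this] obtain k where k: "k < N" "V (u k) \<le> c + e" by blast
    have uk: "u k \<in> S" using N(2) k(1) by blast
    show ?thesis by (rule cInf_lower2[OF imageI[OF uk] k(2) bb])
  qed
  have hi: "c - e \<le> Sup (V ` S)" if e: "0 < e" for e
  proof -
    obtain N u where N: "N \<ge> 1" "\<forall>k<N. u k \<in> S" "\<bar>(\<Sum>k<N. V (u k)) / real N - c\<bar> \<le> e"
      using approx e by blast
    have "c - e \<le> (\<Sum>k<N. V (u k)) / real N" using N(3) by linarith
    from exists_ge_avg[OF N(1) this] obtain k where k: "k < N" "c - e \<le> V (u k)" by blast
    have uk: "u k \<in> S" using N(2) k(1) by blast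
    show ?thesis by (rule cSup_upper2[OF imageI[OF uk] k(2) ba])
  qed
  have 1: "Inf (V ` S) \<le> c" by (rule field_le_epsilon) (rule lo)
  have 2: "c \<le> Sup (V ` S)"
  proof (rule field_le_epsilon)
    fix e :: real assume "0 < e"
    from hi[OF this] show "c \<le> Sup (V ` S) + e" by linarith
  qed
  from 1 2 show ?thesis by simp
qed

lemma pin:
  fixes V :: "'x \<Rightarrow> real"
  assumes x: "x \<in> {Inf (V ` S) .. Sup (V ` S)}" and S: "S \<noteq> {}" and V: "\<forall>f\<in>S. \<bar>V f - c\<bar> \<le> e"
  shows "\<bar>x - c\<bar> \<le> e"
proof -
  have "c - e \<le> Inf (V ` S)" using S V by (intro cInf_greatest) auto
  moreover have "Sup (V ` S) \<le> c + e" using S V by (intro cSup_least) auto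
  ultimately show ?thesis using x by auto
qed

lemma eq_by_eps:
  fixes x c :: real
  assumes "\<forall>e>0. \<bar>x - c\<bar> \<le> e" shows "x = c"
proof (rule ccontr)
  assume "x \<noteq> c" hence h: "\<bar>x - c\<bar> > 0" by simp
  have "\<bar>x - c\<bar> / 2 < \<bar>x - c\<bar>" using h by simp
  thus False using assms[rule_format, OF half_gt_zero[OF h]] by linarith
qed

lemma Inter_pair_iff:
  "x \<in> \<Inter> {F n w | n w. P n w} \<longleftrightarrow> (\<forall>n w. P n w \<longrightarrow> x \<in> F n w)"
  by blast

lemma rendezvous:
  assumes p: "0 < p" and fam: "\<forall>N. \<exists>w A. disj_fam B M p N w A"
  shows "rendezvous_set B M p = {2 powr (1 / p)}"
proof -
  define c where "c = (2::real) powr (1/p)"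
  define S where "S = Lp_sphere B M p"
  obtain w0 A0 where "disj_fam B M p 1 w0 A0" using fam by blast
  hence "w0 0 \<in> S" by (simp add: disj_fam_def S_def)
  hence Sne: "S \<noteq> {}" by auto
  obtain Bd where Bd: "\<forall>f\<in>S. \<forall>g\<in>S. Lp_norm M p (f - g) \<le> Bd \<and> PN M p (f - g) \<le> Bd"
    using Lp_norm_bound[OF p] unfolding S_def by blast
  have mem: "x \<in> rendezvous_set B M p \<longleftrightarrow> (\<forall>n w. n \<ge> 1 \<and> (\<forall>j<n. w j \<in> S) \<longrightarrow>
      x \<in> {Inf ((\<lambda>f. (\<Sum>j<n. Lp_norm M p (f - w j)) / real n) ` S) .. Sup ((\<lambda>f. (\<Sum>j<n. Lp_norm M p (f - w j)) / real n) ` S)})" for x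
    unfolding rendezvous_set_def avg_interval_def S_def by (rule Inter_pair_iff)
  show ?thesis
  proof (intro equalityI subsetI)
    fix x assume x: "x \<in> rendezvous_set B M p"
    have "\<bar>x - c\<bar> \<le> e" if e: "e > 0" for e
    proof -
      obtain N w where N: "N \<ge> 1" "\<forall>j<N. w j \<in> S"
        "\<forall>g\<in>S. \<bar>(\<Sum>j<N. Lp_norm M p (g - w j)) / real N - c\<bar> \<le> e"
        using key[OF p fam e] unfolding S_def c_def by blast
      show ?thesis using pin[OF mem[THEN iffD1, OF x, rule_format, OF conjI[OF N(1,2)]] Sne N(3)] .
    qed
    thus "x \<in> {2 powr (1 / p)}" using eq_by_eps unfolding c_def by auto
  next
    fix x assume "x \<in> {2 powr (1 / p)}"
    hence xc: "x = c" by (simp add: c_def)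
    show "x \<in> rendezvous_set B M p"
      unfolding mem xc
    proof (intro allI impI)
      fix n :: nat and w assume nw: "1 \<le> n \<and> (\<forall>j<n. w j \<in> S)"
      define V where "V f = (\<Sum>j<n. Lp_norm M p (f - w j)) / real n" for f
      have "c \<in> {Inf (V ` S) .. Sup (V ` S)}"
      proof (rule in_interval[where Bd = Bd])
        show "\<forall>f\<in>S. 0 \<le> V f \<and> V f \<le> Bd"
        proof
          fix f assume f: "f \<in> S"
          have "0 \<le> V f" unfolding V_def by (intro divide_nonneg_nonneg sum_nonneg Lp_norm_nonneg) auto
          moreover have "V f \<le> Bd"
          proof -
            have "(\<Sum>j<n. Lp_norm M p (f - w j)) \<le> (\<Sum>j<n. Bd)"
              using Bd f nw by (intro sum_mono) auto
            thus ?thesis using nw unfolding V_def by (simp add: field_simps)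
          qed
          ultimately show "0 \<le> V f \<and> V f \<le> Bd" by simp
        qed
        show "\<forall>e>0. \<exists>N u. N \<ge> 1 \<and> (\<forall>k<N. u k \<in> S) \<and> \<bar>(\<Sum>k<N. V (u k)) / real N - c\<bar> \<le> e"
        proof (intro allI impI)
          fix e :: real assume e: "e > 0"
          obtain N u where N: "N \<ge> 1" "\<forall>k<N. u k \<in> S"
            "\<forall>g\<in>S. \<bar>(\<Sum>k<N. Lp_norm M p (g - u k)) / real N - c\<bar> \<le> e"
            using key[OF p fam e] unfolding S_def c_def by blast
          have "(\<Sum>k<N. V (u k)) / real N = (\<Sum>j<n. (\<Sum>k<N. Lp_norm M p (w j - u k)) / real N) / real n"
          proof -
            have "(\<Sum>k<N. V (u k)) = (\<Sum>k<N. (\<Sum>j<n. Lp_norm M p (u k - w j))) / real n"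
              unfolding V_def by (simp add: sum_divide_distrib)
            also have "(\<Sum>k<N. (\<Sum>j<n. Lp_norm M p (u k - w j))) = (\<Sum>j<n. (\<Sum>k<N. Lp_norm M p (w j - u k)))"
              by (subst sum.swap) (simp add: Lp_norm_commute[of M p "u _"])
            finally show ?thesis by (simp add: sum_divide_distrib field_simps)
          qed
          also have "\<bar>\<dots> - c\<bar> \<le> e"
            using N nw by (intro avg_close) auto
          finally show "\<exists>N u. N \<ge> 1 \<and> (\<forall>k<N. u k \<in> S) \<and> \<bar>(\<Sum>k<N. V (u k)) / real N - c\<bar> \<le> e"
            using N by blast
        qed
      qed
      thus "c \<in> {Inf ((\<lambda>f. (\<Sum>j<n. Lp_norm M p (f - w j)) / real n) ` S) .. Sup ((\<lambda>f. (\<Sum>j<n. Lp_norm M p (f - w j)) / real n) ` S)}"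
        unfolding V_def .
    qed
  qed
qed

lemma PN_commute: "PN M p (f - g) = PN M p (g - f)"
  by (simp add: PN_def norm_minus_commute)

lemma PN_self: "0 < p \<Longrightarrow> PN M p (f - f) = 0"
  by (simp add: PN_def)

lemma PN_zero_AE:
  assumes p: "0 < p" and f: "f \<in> Lp_space B M p" and g: "g \<in> Lp_space B M p" and z: "PN M p (f - g) = 0"
  shows "AE x in M. f x = g x"
proof -
  have I: "integrable M (\<lambda>x. norm (f x - g x) powr p)"
    using Lp_diff[OF p f g] by (simp add: Lp_space_def)
  have "(\<integral>x. norm (f x - g x) powr p \<partial>M) = 0" using z by (simp add: PN_def fun_diff_def)
  hence "AE x in M. norm (f x - g x) powr p = 0"
    using integral_nonneg_eq_0_iff_AE[OF I] by simp
  thus ?thesis by eventually_elim simp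
qed

lemma Lp_norm_cong_AE:
  assumes p: "0 < p" and f: "f \<in> Lp_space B M p" and g1: "g1 \<in> Lp_space B M p" and g2: "g2 \<in> Lp_space B M p"
    and ae: "AE x in M. g1 x = g2 x"
  shows "PN M p (f - g1) = PN M p (f - g2)"
  unfolding PN_def using f g1 g2 ae
  by (intro integral_cong_AE) (auto simp: Lp_space_def elim!: eventually_mono)

definition Nsp :: "'b::{real_normed_field,banach,second_countable_topology} itself \<Rightarrow> 'a measure \<Rightarrow> real \<Rightarrow> ('a \<Rightarrow> 'b) measure" where
  "Nsp B M p = sigma (Lp_sphere B M p) {U. openin (Lp_sphere_top B M p) U}"

context
  fixes B :: "'b::{real_normed_field,banach,second_countable_topology} itself" and M :: "'a measure" and p :: real
  assumes p: "0 < p"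
begin

abbreviation "S \<equiv> Lp_sphere B M p"
abbreviation "T \<equiv> Lp_sphere_top B M p"

lemma topspaceT: "topspace T = S"
proof
  show "topspace T \<subseteq> S" unfolding Lp_sphere_top_def by auto
  show "S \<subseteq> topspace T"
  proof
    fix f assume f: "f \<in> S"
    have "f \<in> {g \<in> S. Lp_norm M p (f - g) < 1}"
      using f p by (simp add: Lp_norm_PN PN_self)
    thus "f \<in> topspace T" unfolding Lp_sphere_top_def topology_generated_by_topspace
      by (intro UnionI[where X="{g \<in> S. Lp_norm M p (f - g) < 1}"]) (use f in \<open>auto intro!: exI[of _ f] exI[of _ "1::real"]\<close>)
  qed
qed

lemma ball_open: "f \<in> S \<Longrightarrow> 0 < e \<Longrightarrow> openin T {g \<in> S. Lp_norm M p (f - g) < e}"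
  unfolding Lp_sphere_top_def by (rule topology_generated_by_Basis) auto

lemma SL: "f \<in> S \<Longrightarrow> f \<in> Lp_space B M p" and SP: "f \<in> S \<Longrightarrow> PN M p f = 1"
  using sphere_iff[OF p] by auto

lemma PN_cont_est:
  assumes e: "0 < e" and f: "f \<in> S" and g0: "g0 \<in> S"
  shows "\<exists>r>0. \<forall>g\<in>S. Lp_norm M p (g0 - g) < r \<longrightarrow> \<bar>PN M p (f - g) - PN M p (f - g0)\<bar> < e"
proof -
  obtain Bd where Bd: "\<forall>f\<in>S. \<forall>g\<in>S. Lp_norm M p (f - g) \<le> Bd \<and> PN M p (f - g) \<le> Bd"
    using Lp_norm_bound[OF p] by blast
  define \<eta> where "\<eta> = e / 2 / (\<bar>Bd\<bar> + 1)"
  have eta: "0 < \<eta>" using e by (simp add: \<eta>_def add_pos_nonneg)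
  have etaB: "\<eta> * \<bar>Bd\<bar> < e / 2"
  proof -
    have "\<eta> * \<bar>Bd\<bar> < \<eta> * (\<bar>Bd\<bar> + 1)" using eta by simp
    also have "\<dots> = e / 2"
    proof -
      have h: "\<bar>Bd\<bar> + 1 \<noteq> 0" using abs_ge_zero[of Bd] by linarith
      have "\<forall>x::real. x \<noteq> 0 \<longrightarrow> e / 2 / x * x = e / 2" by simp
      thus ?thesis unfolding \<eta>_def using h by blast
    qed
    finally show ?thesis .
  qed
  obtain C where C: "C > 0" "\<forall>x y::real. 0 \<le> x \<longrightarrow> 0 \<le> y \<longrightarrow> (x + y) powr p \<le> (1 + \<eta>) * x powr p + C * y powr p"
    using qt_real[OF p eta] by auto
  define r where "r = (e / (2 * C)) powr (1 / p)"
  have r: "0 < r" using e C by (simp add: r_def)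
  show ?thesis
  proof (intro exI[of _ r] conjI r ballI impI)
    fix g assume g: "g \<in> S" and lt: "Lp_norm M p (g0 - g) < r"
    have "PN M p (g0 - g) = Lp_norm M p (g0 - g) powr p" by (rule PN_from_norm[OF p])
    also have "\<dots> < r powr p" using lt p Lp_norm_nonneg by (intro powr_less_mono2) auto
    also have "r powr p = e / (2 * C)" using e C p by (simp add: r_def powr_powr)
    finally have small: "C * PN M p (g0 - g) < e / 2" using C by (simp add: field_simps)
    have 1: "PN M p (f - g) \<le> (1 + \<eta>) * PN M p (f - g0) + C * PN M p (g0 - g)"
      by (rule PN_qt[OF p C(2) SL[OF f] SL[OF g] SL[OF g0]])
    have 2: "PN M p (f - g0) \<le> (1 + \<eta>) * PN M p (f - g) + C * PN M p (g - g0)"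
      by (rule PN_qt[OF p C(2) SL[OF f] SL[OF g0] SL[OF g]])
    have 3: "PN M p (g - g0) = PN M p (g0 - g)" by (rule PN_commute)
    have "PN M p (f - g0) \<le> Bd" using Bd f g0 by blast
    hence b1: "\<eta> * PN M p (f - g0) \<le> \<eta> * \<bar>Bd\<bar>" using eta by (intro mult_left_mono) auto
    have "PN M p (f - g) \<le> Bd" using Bd f g by blast
    hence b2: "\<eta> * PN M p (f - g) \<le> \<eta> * \<bar>Bd\<bar>" using eta by (intro mult_left_mono) auto
    show "\<bar>PN M p (f - g) - PN M p (f - g0)\<bar> < e"
      using 1 2 3 b1 b2 small etaB by (simp add: abs_less_iff algebra_simps)
  qed
qed

lemma PN_open_preimage:
  assumes f: "f \<in> S" and V: "open V"
  shows "openin T {g \<in> S. PN M p (f - g) \<in> V}"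
proof (subst openin_subopen, intro ballI)
  fix g0 assume "g0 \<in> {g \<in> S. PN M p (f - g) \<in> V}"
  hence g0: "g0 \<in> S" "PN M p (f - g0) \<in> V" by auto
  obtain e where e: "e > 0" "\<forall>y. dist y (PN M p (f - g0)) < e \<longrightarrow> y \<in> V"
    using V g0(2) unfolding open_dist by blast
  obtain r where r: "r > 0" "\<forall>g\<in>S. Lp_norm M p (g0 - g) < r \<longrightarrow> \<bar>PN M p (f - g) - PN M p (f - g0)\<bar> < e"
    using PN_cont_est[OF e(1) f g0(1)] by blast
  show "\<exists>U. openin T U \<and> g0 \<in> U \<and> U \<subseteq> {g \<in> S. PN M p (f - g) \<in> V}"
  proof (intro exI[of _ "{g \<in> S. Lp_norm M p (g0 - g) < r}"] conjI)
    show "openin T {g \<in> S. Lp_norm M p (g0 - g) < r}" by (rule ball_open[OF g0(1) r(1)])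
    show "g0 \<in> {g \<in> S. Lp_norm M p (g0 - g) < r}" using g0 r p by (simp add: Lp_norm_PN PN_self)
    show "{g \<in> S. Lp_norm M p (g0 - g) < r} \<subseteq> {g \<in> S. PN M p (f - g) \<in> V}"
      using r e by (auto simp: dist_real_def)
  qed
qed

lemma openin_sub: "openin T U \<Longrightarrow> U \<subseteq> S"
  using openin_subset[of T U] topspaceT by simp

lemma space_Nsp: "space (Nsp B M p) = S" and sets_Nsp: "sets (Nsp B M p) = sigma_sets S {U. openin T U}"
  unfolding Nsp_def using openin_sub by (auto intro!: space_measure_of sets_measure_of)

lemma PN_meas: "f \<in> S \<Longrightarrow> (\<lambda>g. PN M p (f - g)) \<in> borel_measurable (Nsp B M p)"
proof (rule borel_measurableI)
  fix V :: "real set" assume f: "f \<in> S" and V: "open V"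
  have "(\<lambda>g. PN M p (f - g)) -` V \<inter> space (Nsp B M p) = {g \<in> S. PN M p (f - g) \<in> V}"
    by (auto simp: space_Nsp)
  also have "\<dots> \<in> sets (Nsp B M p)"
    unfolding sets_Nsp using PN_open_preimage[OF f V] by (auto intro: sigma_sets.Basic)
  finally show "(\<lambda>g. PN M p (f - g)) -` V \<inter> space (Nsp B M p) \<in> sets (Nsp B M p)" .
qed

lemma Lpn_meas: "f \<in> S \<Longrightarrow> (\<lambda>g. Lp_norm M p (f - g)) \<in> borel_measurable (Nsp B M p)"
  unfolding Lp_norm_PN using PN_meas by measurable

end

context
  fixes B :: "'b::{real_normed_field,banach,second_countable_topology} itself" and M :: "'a measure" and p :: real
  assumes p: "0 < p"
begin

definition sat :: "('a \<Rightarrow> 'b) set \<Rightarrow> bool" where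
  "sat Y \<longleftrightarrow> Y \<subseteq> Lp_sphere B M p \<and> (\<forall>g1\<in>Y. \<forall>g2\<in>Lp_sphere B M p. PN M p (g1 - g2) = 0 \<longrightarrow> g2 \<in> Y)"

lemma open_sat:
  assumes "openin (Lp_sphere_top B M p) U" shows "sat U"
proof -
  have "generate_topology_on {{g \<in> Lp_sphere B M p. Lp_norm M p (f - g) < e} | f e. f \<in> Lp_sphere B M p \<and> e > 0} U"
    using assms unfolding Lp_sphere_top_def openin_topology_generated_by_iff .
  thus ?thesis
  proof (induction rule: generate_topology_on.induct)
    case Empty
    then show ?case by (simp add: sat_def)
  next
    case (Int a b)
    then show ?case by (auto simp: sat_def)
  next
    case (UN K)
    then show ?case unfolding sat_def by blast
  next
    case (Basis s)
    then obtain f e where s: "s = {g \<in> Lp_sphere B M p. Lp_norm M p (f - g) < e}" and f: "f \<in> Lp_sphere B M p"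
      by blast
    show ?case unfolding sat_def
    proof (intro conjI ballI impI)
      show "s \<subseteq> Lp_sphere B M p" using s by auto
      fix g1 g2 assume g1: "g1 \<in> s" and g2: "g2 \<in> Lp_sphere B M p" and z: "PN M p (g1 - g2) = 0"
      have g1S: "g1 \<in> Lp_sphere B M p" using g1 s by auto
      have ae: "AE x in M. g1 x = g2 x"
        by (rule PN_zero_AE[OF p SL[OF p g1S] SL[OF p g2] z])
      have "PN M p (f - g1) = PN M p (f - g2)"
        by (rule Lp_norm_cong_AE[OF p SL[OF p f] SL[OF p g1S] SL[OF p g2] ae])
      thus "g2 \<in> s" using g1 g2 s by (simp add: Lp_norm_PN)
    qed
  qed
qed

lemma sigma_sat:
  assumes "X \<in> sigma_sets (Lp_sphere B M p) {U. openin (Lp_sphere_top B M p) U}" shows "sat X"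
  using assms
proof (induction rule: sigma_sets.induct)
  case (Basic a)
  then show ?case using open_sat by auto
next
  case Empty
  then show ?case by (simp add: sat_def)
next
  case (Compl a)
  show ?case unfolding sat_def
  proof (intro conjI ballI impI)
    show "Lp_sphere B M p - a \<subseteq> Lp_sphere B M p" by auto
    fix g1 g2 assume g1: "g1 \<in> Lp_sphere B M p - a" and g2: "g2 \<in> Lp_sphere B M p" and z: "PN M p (g1 - g2) = 0"
    show "g2 \<in> Lp_sphere B M p - a"
    proof (rule ccontr)
      assume "g2 \<notin> Lp_sphere B M p - a"
      hence "g2 \<in> a" using g2 by auto
      moreover have "PN M p (g2 - g1) = 0" using z PN_commute by metis
      ultimately have "g1 \<in> a" using Compl.IH g1 unfolding sat_def by blast
      thus False using g1 by auto
    qed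
  qed
next
  case (Union a)
  then show ?case unfolding sat_def by blast
qed

definition fin_meas :: "nat \<Rightarrow> (nat \<Rightarrow> 'a \<Rightarrow> 'b) \<Rightarrow> ('a \<Rightarrow> 'b) measure" where
  "fin_meas N w = distr (uniform_count_measure {..<N}) (Nsp B M p) w"

lemma w_meas:
  assumes w: "\<forall>j<N. w j \<in> Lp_sphere B M p"
  shows "w \<in> measurable (uniform_count_measure {..<N}) (Nsp B M p)"
proof -
  have "w \<in> measurable (count_space {..<N}) (Nsp B M p)"
    using w by (simp add: space_Nsp[OF p] Pi_iff)
  thus ?thesis by (subst measurable_cong_sets[OF sets_uniform_count_measure_count_space refl])
qed

lemma fin_potential:
  assumes N: "N \<ge> 1" and w: "\<forall>j<N. w j \<in> Lp_sphere B M p" and f: "f \<in> Lp_sphere B M p"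
  shows "potential M p (fin_meas N w) f = (\<Sum>j<N. Lp_norm M p (f - w j)) / real N"
proof -
  have "potential M p (fin_meas N w) f = (\<integral>j. Lp_norm M p (f - w j) \<partial>uniform_count_measure {..<N})"
    unfolding potential_def fin_meas_def
    by (rule integral_distr[OF w_meas[OF w] Lpn_meas[OF p f]])
  also have "\<dots> = (\<Sum>j<N. Lp_norm M p (f - w j)) / real N"
    by (simp add: integral_uniform_count_measure)
  finally show ?thesis .
qed

lemma fin_regular:
  assumes N: "N \<ge> 1" and w: "\<forall>j<N. w j \<in> Lp_sphere B M p"
  shows "regular_borel_prob B M p (fin_meas N w)"
proof -
  let ?S = "Lp_sphere B M p" and ?T = "Lp_sphere_top B M p" and ?\<nu> = "fin_meas N w"
  have wm: "w \<in> measurable (uniform_count_measure {..<N}) (Nsp B M p)" by (rule w_meas[OF w])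
  have "0 \<in> {..<N}" using N by simp
  hence ne: "{..<N} \<noteq> {}" by blast
  interpret U: prob_space "uniform_count_measure {..<N}"
    by (rule prob_space_uniform_count_measure[OF finite_lessThan ne])
  have P: "prob_space ?\<nu>" unfolding fin_meas_def by (rule U.prob_space_distr[OF wm])
  interpret V: prob_space ?\<nu> by (rule P)
  have sp: "space ?\<nu> = ?S" by (simp add: fin_meas_def space_Nsp[OF p])
  have st: "sets ?\<nu> = sigma_sets ?S {U. openin ?T U}" by (simp add: fin_meas_def sets_Nsp[OF p])
  have meq: "measure ?\<nu> Y = measure ?\<nu> X"
    if X: "X \<in> sets ?\<nu>" and Y: "Y \<in> sets ?\<nu>" and eq: "\<forall>j<N. w j \<in> Y \<longleftrightarrow> w j \<in> X" for X Y
  proof -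
    have XN: "X \<in> sets (Nsp B M p)" and YN: "Y \<in> sets (Nsp B M p)" using X Y by (auto simp: fin_meas_def)
    have "w -` Y \<inter> space (uniform_count_measure {..<N}) = w -` X \<inter> space (uniform_count_measure {..<N})"
      using eq by (auto simp: space_uniform_count_measure)
    thus ?thesis unfolding fin_meas_def measure_distr[OF wm XN] measure_distr[OF wm YN] by simp
  qed
  have reg: "measure ?\<nu> X = Sup {measure ?\<nu> K | K. compactin ?T K \<and> K \<subseteq> X} \<and>
        measure ?\<nu> X = Inf {measure ?\<nu> U | U. openin ?T U \<and> X \<subseteq> U}" if X: "X \<in> sets ?\<nu>" for X
  proof
    have satX: "sat X" using X st sigma_sat by auto
    have XS: "X \<subseteq> ?S" using satX by (simp add: sat_def)
    define J where "J = {j. j < N \<and> w j \<in> X}"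
    define K where "K = {g \<in> ?S. \<exists>j\<in>J. PN M p (w j - g) = 0}"
    have finJ: "finite J" by (simp add: J_def)
    have Ksets: "K \<in> sets ?\<nu>"
    proof -
      have "K = (\<Union>j\<in>J. (\<lambda>g. PN M p (w j - g)) -` {0} \<inter> space (Nsp B M p))"
        unfolding K_def by (auto simp: space_Nsp[OF p])
      also have "\<dots> \<in> sets (Nsp B M p)"
      proof (rule sets.finite_UN[OF finJ])
        fix j assume "j \<in> J"
        hence "w j \<in> ?S" using w by (auto simp: J_def)
        thus "(\<lambda>g. PN M p (w j - g)) -` {0} \<inter> space (Nsp B M p) \<in> sets (Nsp B M p)"
          by (intro measurable_sets[OF PN_meas[OF p]]) auto
      qed
      finally show ?thesis by (simp add: fin_meas_def)
    qed
    have KX: "K \<subseteq> X"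
    proof
      fix g assume "g \<in> K"
      then obtain j where j: "j \<in> J" "PN M p (w j - g) = 0" "g \<in> ?S" by (auto simp: K_def)
      thus "g \<in> X" using satX unfolding sat_def J_def by blast
    qed
    have Kc: "compactin ?T K"
      unfolding compactin_def
    proof (intro conjI allI impI)
      show "K \<subseteq> topspace ?T" using topspaceT[OF p] by (auto simp: K_def)
      fix \<U> assume \<U>: "(\<forall>U\<in>\<U>. openin ?T U) \<and> K \<subseteq> \<Union>\<U>"
      have wK: "w j \<in> K" if "j \<in> J" for j
        using that w p by (auto simp: K_def J_def PN_self intro!: bexI[of _ j])
      have "\<forall>j\<in>J. \<exists>U\<in>\<U>. w j \<in> U" using wK \<U> by blast
      then obtain u where u: "\<forall>j\<in>J. u j \<in> \<U> \<and> w j \<in> u j" by metis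
      show "\<exists>\<F>. finite \<F> \<and> \<F> \<subseteq> \<U> \<and> K \<subseteq> \<Union>\<F>"
      proof (intro exI[of _ "u ` J"] conjI)
        show "finite (u ` J)" using finJ by simp
        show "u ` J \<subseteq> \<U>" using u by auto
        show "K \<subseteq> \<Union> (u ` J)"
        proof
          fix g assume "g \<in> K"
          then obtain j where j: "j \<in> J" "PN M p (w j - g) = 0" "g \<in> ?S" by (auto simp: K_def)
          have "sat (u j)" using u j(1) \<U> open_sat by blast
          hence "g \<in> u j" using u j unfolding sat_def by blast
          thus "g \<in> \<Union> (u ` J)" using j(1) by blast
        qed
      qed
    qed
    have KXeq: "measure ?\<nu> K = measure ?\<nu> X"
    proof (rule meq[OF X Ksets], intro allI impI)
      fix j assume j: "j < N"
      show "w j \<in> K \<longleftrightarrow> w j \<in> X"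
      proof
        assume "w j \<in> K" thus "w j \<in> X" using KX by blast
      next
        assume "w j \<in> X" thus "w j \<in> K" using j w p by (auto simp: K_def J_def PN_self intro!: bexI[of _ j])
      qed
    qed
    show "measure ?\<nu> X = Sup {measure ?\<nu> K | K. compactin ?T K \<and> K \<subseteq> X}"
    proof (rule sym, rule cSup_eq_maximum)
      show "measure ?\<nu> X \<in> {measure ?\<nu> K | K. compactin ?T K \<and> K \<subseteq> X}"
        using Kc KX KXeq by (intro CollectI exI[of _ K]) auto
      fix x assume "x \<in> {measure ?\<nu> K | K. compactin ?T K \<and> K \<subseteq> X}"
      then obtain K' where "x = measure ?\<nu> K'" "K' \<subseteq> X" by blast
      thus "x \<le> measure ?\<nu> X" using V.finite_measure_mono[OF _ X] by simp
    qed
    define J' where "J' = {j. j < N \<and> w j \<notin> X}"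
    define U0 where "U0 = (\<Inter>j\<in>J'. {g \<in> ?S. PN M p (w j - g) \<in> {0<..}}) \<inter> topspace ?T"
    have U0open: "openin ?T U0"
      unfolding U0_def
    proof (rule openin_INT)
      show "finite J'" by (simp add: J'_def)
      fix j assume "j \<in> J'"
      hence "w j \<in> ?S" using w by (auto simp: J'_def)
      thus "openin ?T {g \<in> ?S. PN M p (w j - g) \<in> {0<..}}"
        by (intro PN_open_preimage[OF p]) auto
    qed
    have XU0: "X \<subseteq> U0"
    proof
      fix g assume g: "g \<in> X"
      have gS: "g \<in> ?S" using g XS by auto
      have "PN M p (w j - g) \<in> {0<..}" if j: "j \<in> J'" for j
      proof -
        have wj: "w j \<in> ?S" "w j \<notin> X" using j w by (auto simp: J'_def)
        have "PN M p (w j - g) \<noteq> 0"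
        proof
          assume "PN M p (w j - g) = 0"
          hence "PN M p (g - w j) = 0" using PN_commute by metis
          hence "w j \<in> X" using satX g wj(1) unfolding sat_def by blast
          thus False using wj(2) by simp
        qed
        thus ?thesis using PN_nonneg[of M p "w j - g"] by simp
      qed
      thus "g \<in> U0" using gS topspaceT[OF p] by (auto simp: U0_def)
    qed
    have U0sets: "U0 \<in> sets ?\<nu>" using U0open st by (auto intro: sigma_sets.Basic)
    have U0eq: "measure ?\<nu> U0 = measure ?\<nu> X"
    proof (rule meq[OF X U0sets], intro allI impI)
      fix j assume j: "j < N"
      show "w j \<in> U0 \<longleftrightarrow> w j \<in> X"
      proof
        assume wU: "w j \<in> U0"
        show "w j \<in> X"
        proof (rule ccontr)
          assume "w j \<notin> X"
          hence "j \<in> J'" using j by (simp add: J'_def)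
          hence "PN M p (w j - w j) \<in> {0<..}" using wU by (auto simp: U0_def)
          thus False using p by (simp add: PN_self)
        qed
      next
        assume "w j \<in> X" thus "w j \<in> U0" using XU0 by blast
      qed
    qed
    show "measure ?\<nu> X = Inf {measure ?\<nu> U | U. openin ?T U \<and> X \<subseteq> U}"
    proof (rule sym, rule cInf_eq_minimum)
      show "measure ?\<nu> X \<in> {measure ?\<nu> U | U. openin ?T U \<and> X \<subseteq> U}"
        using U0open XU0 U0eq by (intro CollectI exI[of _ U0]) auto
      fix x assume "x \<in> {measure ?\<nu> U | U. openin ?T U \<and> X \<subseteq> U}"
      then obtain U where U: "x = measure ?\<nu> U" "openin ?T U" "X \<subseteq> U" by blast
      have "U \<in> sets ?\<nu>" using U(2) st by (auto intro: sigma_sets.Basic)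
      thus "measure ?\<nu> X \<le> x" using V.finite_measure_mono[OF U(3)] U(1) by simp
    qed
  qed
  show ?thesis unfolding regular_borel_prob_def using P sp st reg by blast
qed

end

lemma prob_bounds:
  fixes f :: "'x \<Rightarrow> real"
  assumes P: "prob_space \<nu>" and m: "f \<in> borel_measurable \<nu>" and ab: "\<forall>x\<in>space \<nu>. a \<le> f x \<and> f x \<le> b"
  shows "integrable \<nu> f" "a \<le> integral\<^sup>L \<nu> f" "integral\<^sup>L \<nu> f \<le> b"
proof -
  interpret prob_space \<nu> by (rule P)
  show I: "integrable \<nu> f"
    using ab by (intro integrable_const_bound[where B="\<bar>a\<bar> + \<bar>b\<bar>"] AE_I2 m) auto
  have "integral\<^sup>L \<nu> (\<lambda>_. a) \<le> integral\<^sup>L \<nu> f"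
    using ab by (intro integral_mono I) auto
  thus "a \<le> integral\<^sup>L \<nu> f" by (simp add: prob_space)
  have "integral\<^sup>L \<nu> f \<le> integral\<^sup>L \<nu> (\<lambda>_. b)"
    using ab by (intro integral_mono I) auto
  thus "integral\<^sup>L \<nu> f \<le> b" by (simp add: prob_space)
qed

lemma Inter_single_iff: "x \<in> \<Inter> {F v | v. P v} \<longleftrightarrow> (\<forall>v. P v \<longrightarrow> x \<in> F v)"
  by blast

lemma average:
  assumes p: "0 < p" and fam: "\<forall>N. \<exists>w A. disj_fam B M p N w A"
  shows "average_set B M p = {2 powr (1 / p)}"
proof -
  define c where "c = (2::real) powr (1/p)"
  define S where "S = Lp_sphere B M p"
  obtain w0 A0 where "disj_fam B M p 1 w0 A0" using fam by blast
  hence "w0 0 \<in> S" by (simp add: disj_fam_def S_def)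
  hence Sne: "S \<noteq> {}" by auto
  obtain Bd where Bd: "\<forall>f\<in>S. \<forall>g\<in>S. Lp_norm M p (f - g) \<le> Bd \<and> PN M p (f - g) \<le> Bd"
    using Lp_norm_bound[OF p] unfolding S_def by blast
  have mem: "x \<in> average_set B M p \<longleftrightarrow> (\<forall>\<nu>. regular_borel_prob B M p \<nu> \<longrightarrow>
      x \<in> {Inf (potential M p \<nu> ` S) .. Sup (potential M p \<nu> ` S)})" for x
    unfolding average_set_def avg_interval_def S_def by (rule Inter_single_iff)
  show ?thesis
  proof (intro equalityI subsetI)
    fix x assume x: "x \<in> average_set B M p"
    have "\<bar>x - c\<bar> \<le> e" if e: "e > 0" for e
    proof -
      obtain N w where N: "N \<ge> 1" "\<forall>j<N. w j \<in> S"
        "\<forall>g\<in>S. \<bar>(\<Sum>j<N. Lp_norm M p (g - w j)) / real N - c\<bar> \<le> e"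
        using key[OF p fam e] unfolding S_def c_def by blast
      have reg: "regular_borel_prob B M p (fin_meas B M p N w)"
        using fin_regular[OF p N(1)] N(2) unfolding S_def by blast
      have xin: "x \<in> {Inf (potential M p (fin_meas B M p N w) ` S) .. Sup (potential M p (fin_meas B M p N w) ` S)}"
        using mem x reg by blast
      have "\<forall>f\<in>S. \<bar>potential M p (fin_meas B M p N w) f - c\<bar> \<le> e"
      proof
        fix f assume f: "f \<in> S"
        have "potential M p (fin_meas B M p N w) f = (\<Sum>j<N. Lp_norm M p (f - w j)) / real N"
          using fin_potential[OF p N(1)] N(2) f unfolding S_def by blast
        thus "\<bar>potential M p (fin_meas B M p N w) f - c\<bar> \<le> e" using N(3) f by simp
      qed
      from pin[OF xin Sne this] show ?thesis .
    qed
    thus "x \<in> {2 powr (1 / p)}" using eq_by_eps unfolding c_def by auto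
  next
    fix x assume "x \<in> {2 powr (1 / p)}"
    hence xc: "x = c" by (simp add: c_def)
    show "x \<in> average_set B M p"
      unfolding mem xc
    proof (intro allI impI)
      fix \<nu> assume reg: "regular_borel_prob B M p \<nu>"
      have P: "prob_space \<nu>" and sp: "space \<nu> = S" and st: "sets \<nu> = sets (Nsp B M p)"
        using reg by (auto simp: regular_borel_prob_def S_def sets_Nsp[OF p])
      have meas: "(\<lambda>g. Lp_norm M p (f - g)) \<in> borel_measurable \<nu>" if f: "f \<in> S" for f
        using Lpn_meas[OF p, of f] f unfolding S_def
        by (subst measurable_cong_sets[OF st refl]) auto
      have B1: "\<forall>g\<in>space \<nu>. 0 \<le> Lp_norm M p (f - g) \<and> Lp_norm M p (f - g) \<le> Bd" if f: "f \<in> S" for f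
        using Bd f sp Lp_norm_nonneg by auto
      note pb = prob_bounds[OF P meas B1]
      have "c \<in> {Inf (potential M p \<nu> ` S) .. Sup (potential M p \<nu> ` S)}"
      proof (rule in_interval[where Bd = Bd])
        show "\<forall>f\<in>S. 0 \<le> potential M p \<nu> f \<and> potential M p \<nu> f \<le> Bd"
          unfolding potential_def using pb by auto
        show "\<forall>e>0. \<exists>N u. N \<ge> 1 \<and> (\<forall>k<N. u k \<in> S) \<and> \<bar>(\<Sum>k<N. potential M p \<nu> (u k)) / real N - c\<bar> \<le> e"
        proof (intro allI impI)
          fix e :: real assume e: "e > 0"
          obtain N u where N: "N \<ge> 1" "\<forall>k<N. u k \<in> S"
            "\<forall>g\<in>S. \<bar>(\<Sum>k<N. Lp_norm M p (g - u k)) / real N - c\<bar> \<le> e"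
            using key[OF p fam e] unfolding S_def c_def by blast
          define F where "F g = (\<Sum>k<N. Lp_norm M p (u k - g)) / real N" for g
          have Fm: "F \<in> borel_measurable \<nu>"
            unfolding F_def using meas N(2) by (intro borel_measurable_divide borel_measurable_sum) auto
          have Fb: "\<forall>g\<in>space \<nu>. c - e \<le> F g \<and> F g \<le> c + e"
          proof
            fix g assume "g \<in> space \<nu>"
            hence "g \<in> S" using sp by simp
            hence "\<bar>F g - c\<bar> \<le> e" using N(3) unfolding F_def by (simp add: Lp_norm_commute[of M p "u _"])
            thus "c - e \<le> F g \<and> F g \<le> c + e" by linarith
          qed
          note Fpb = prob_bounds[OF P Fm Fb]
          have "(\<Sum>k<N. potential M p \<nu> (u k)) / real N = integral\<^sup>L \<nu> F"
          proof -
            have "integral\<^sup>L \<nu> F = (\<integral>g. (\<Sum>k<N. Lp_norm M p (u k - g)) \<partial>\<nu>) / real N"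
              unfolding F_def by simp
            also have "(\<integral>g. (\<Sum>k<N. Lp_norm M p (u k - g)) \<partial>\<nu>) = (\<Sum>k<N. potential M p \<nu> (u k))"
              unfolding potential_def using pb N(2) by (intro Bochner_Integration.integral_sum) auto
            finally show ?thesis by simp
          qed
          hence "\<bar>(\<Sum>k<N. potential M p \<nu> (u k)) / real N - c\<bar> \<le> e" using Fpb(2,3) by simp
          thus "\<exists>N u. N \<ge> 1 \<and> (\<forall>k<N. u k \<in> S) \<and> \<bar>(\<Sum>k<N. potential M p \<nu> (u k)) / real N - c\<bar> \<le> e"
            using N by blast
        qed
      qed
      thus "c \<in> {Inf (potential M p \<nu> ` S) .. Sup (potential M p \<nu> ` S)}" .
    qed
  qed
qed

lemma LA:
  fixes c :: "'r \<Rightarrow> nat \<Rightarrow> 'b::field"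
  assumes "finite R" "K < card R"
  shows "\<exists>d. (\<exists>m\<in>R. d m \<noteq> 0) \<and> (\<forall>i<K. (\<Sum>m\<in>R. d m * c m i) = 0)"
  using assms
proof (induction K arbitrary: R c)
  case 0
  then obtain m0 where "m0 \<in> R" by (metis card.empty card_ge_0_finite ex_in_conv less_numeral_extra(3))
  thus ?case by (intro exI[of _ "\<lambda>_. 1"]) auto
next
  case (Suc K)
  show ?case
  proof (cases "\<forall>m\<in>R. c m K = 0")
    case True
    obtain d where d: "\<exists>m\<in>R. d m \<noteq> 0" "\<forall>i<K. (\<Sum>m\<in>R. d m * c m i) = 0"
      using Suc.IH[of R c] Suc.prems by auto
    show ?thesis
    proof (intro exI[of _ d] conjI d(1) allI impI)
      fix i assume "i < Suc K"
      thus "(\<Sum>m\<in>R. d m * c m i) = 0"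
        using d(2) True by (cases "i = K") auto
    qed
  next
    case False
    then obtain m0 where m0: "m0 \<in> R" "c m0 K \<noteq> 0" by auto
    define R' where "R' = R - {m0}"
    have finR': "finite R'" using Suc.prems by (simp add: R'_def)
    have cardR': "K < card R'" using Suc.prems m0 by (simp add: R'_def)
    define c' where "c' m i = c m i - (c m K / c m0 K) * c m0 i" for m i
    obtain d' where d': "\<exists>m\<in>R'. d' m \<noteq> 0" "\<forall>i<K. (\<Sum>m\<in>R'. d' m * c' m i) = 0"
      using Suc.IH[OF finR' cardR', of c'] by auto
    define d where "d m = (if m = m0 then - (\<Sum>m'\<in>R'. d' m' * c m' K) / c m0 K else d' m)" for m
    show ?thesis
    proof (intro exI[of _ d] conjI allI impI)
      show "\<exists>m\<in>R. d m \<noteq> 0" using d'(1) by (auto simp: d_def R'_def)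
      fix i assume i: "i < Suc K"
      have "(\<Sum>m\<in>R. d m * c m i) = d m0 * c m0 i + (\<Sum>m\<in>R'. d m * c m i)"
        unfolding R'_def using Suc.prems m0 by (subst sum.remove[of R m0]) auto
      also have "(\<Sum>m\<in>R'. d m * c m i) = (\<Sum>m\<in>R'. d' m * c m i)"
        by (intro sum.cong) (auto simp: d_def R'_def)
      also have "d m0 * c m0 i = - (\<Sum>m\<in>R'. d' m * (c m K / c m0 K) * c m0 i)"
      proof -
        have "d m0 * c m0 i = - ((\<Sum>m\<in>R'. d' m * c m K) * (c m0 i / c m0 K))" by (simp add: d_def)
        also have "\<dots> = - (\<Sum>m\<in>R'. d' m * c m K * (c m0 i / c m0 K))" by (simp only: sum_distrib_right)
        also have "(\<Sum>m\<in>R'. d' m * c m K * (c m0 i / c m0 K)) = (\<Sum>m\<in>R'. d' m * (c m K / c m0 K) * c m0 i)"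
          by (intro sum.cong refl) (simp add: divide_inverse mult_ac)
        finally show ?thesis .
      qed
      finally have eq: "(\<Sum>m\<in>R. d m * c m i) = (\<Sum>m\<in>R'. d' m * c' m i)"
        by (simp add: c'_def sum_subtractf[symmetric] algebra_simps)
      show "(\<Sum>m\<in>R. d m * c m i) = 0"
      proof (cases "i = K")
        case True
        have "c' m K = 0" for m using m0(2) by (simp add: c'_def)
        thus ?thesis using eq True by simp
      next
        case False
        thus ?thesis using eq d'(2) i by simp
      qed
    qed
  qed
qed

lemma ae_const:
  fixes h :: "'a \<Rightarrow> 'b::{metric_space,second_countable_topology}"
  assumes hm: "h \<in> borel_measurable M" and SS: "SS \<in> sets M"
    and dich: "\<And>y r. r > 0 \<Longrightarrow> {x \<in> SS. h x \<in> ball y r} \<in> null_sets M \<or> {x \<in> SS. h x \<notin> ball y r} \<in> null_sets M"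
  shows "\<exists>c. AE x in M. x \<in> SS \<longrightarrow> h x = c"
proof (cases "SS \<in> null_sets M")
  case True
  thus ?thesis using AE_not_in[OF True] by (auto elim: eventually_mono)
next
  case nn: False
  have Ssp: "SS \<subseteq> space M" using SS sets.sets_into_space by auto
  obtain D :: "'b set" where D: "countable D" "\<And>X. open X \<Longrightarrow> X \<noteq> {} \<Longrightarrow> \<exists>d \<in> D. d \<in> X"
    using countable_dense_setE by blast
  define r where "r n = 1 / real (Suc n)" for n
  have rpos: "r n > 0" for n by (simp add: r_def)
  have "\<exists>d\<in>D. {x \<in> SS. h x \<in> ball d (r n)} \<notin> null_sets M" for n
  proof (rule ccontr)
    assume "\<not> ?thesis"
    hence all: "\<forall>d\<in>D. {x \<in> SS. h x \<in> ball d (r n)} \<in> null_sets M" by auto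
    have "SS = (\<Union>d\<in>D. {x \<in> SS. h x \<in> ball d (r n)})"
    proof (intro equalityI subsetI)
      fix x assume x: "x \<in> SS"
      obtain d where "d \<in> D" "d \<in> ball (h x) (r n)" using D(2)[of "ball (h x) (r n)"] rpos[of n] by auto
      thus "x \<in> (\<Union>d\<in>D. {x \<in> SS. h x \<in> ball d (r n)})" using x by (auto simp: dist_commute)
    qed auto
    also have "\<dots> \<in> null_sets M" using all D(1) by (intro null_sets_UN') auto
    finally show False using nn by simp
  qed
  then obtain dn where dn: "\<forall>n. dn n \<in> D \<and> {x \<in> SS. h x \<in> ball (dn n) (r n)} \<notin> null_sets M" by metis
  have Nn: "{x \<in> SS. h x \<notin> ball (dn n) (r n)} \<in> null_sets M" for n
    using dich[OF rpos[of n], of "dn n"] dn by auto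
  have "\<forall>n. AE x in M. x \<notin> {x \<in> SS. h x \<notin> ball (dn n) (r n)}"
    using Nn AE_not_in by blast
  hence "AE x in M. \<forall>n. x \<notin> {x \<in> SS. h x \<notin> ball (dn n) (r n)}"
    by (rule AE_all_countable[THEN iffD2])
  hence AEQ: "AE x in M. x \<in> SS \<longrightarrow> (\<forall>n. h x \<in> ball (dn n) (r n))"
    by (auto elim: eventually_mono)
  obtain x0 where x0: "x0 \<in> SS" "\<forall>n. h x0 \<in> ball (dn n) (r n)"
  proof (rule ccontr)
    assume "\<not> thesis"
    hence nQ: "\<forall>x\<in>SS. \<not> (\<forall>n. h x \<in> ball (dn n) (r n))" using that by blast
    have "AE x in M. x \<notin> SS" using AEQ by (rule eventually_mono) (use nQ in blast)
    hence "SS \<in> null_sets M" using AE_iff_null_sets[OF SS] by simp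
    thus False using nn by simp
  qed
  show ?thesis
  proof (intro exI[of _ "h x0"])
    show "AE x in M. x \<in> SS \<longrightarrow> h x = h x0"
      using AEQ
    proof (rule eventually_mono, intro impI)
      fix x assume Q: "x \<in> SS \<longrightarrow> (\<forall>n. h x \<in> ball (dn n) (r n))" and xS: "x \<in> SS"
      have lt: "dist (h x) (h x0) < 2 * r n" for n
      proof -
        have "dist (h x) (h x0) \<le> dist (h x) (dn n) + dist (dn n) (h x0)" by (rule dist_triangle)
        also have "\<dots> < r n + r n" using Q xS x0(2)[rule_format, of n]
          by (intro add_strict_mono) (auto simp: dist_commute)
        finally show ?thesis by simp
      qed
      show "h x = h x0"
      proof (rule ccontr)
        assume "h x \<noteq> h x0"
        hence "dist (h x) (h x0) / 2 > 0" by simp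
        then obtain n where n: "inverse (real (Suc n)) < dist (h x) (h x0) / 2"
          using reals_Archimedean by blast
        have "2 * r n < dist (h x) (h x0)" using n by (simp add: r_def field_simps)
        thus False using lt[of n] by simp
      qed
    qed
  qed
qed

definition LpNull :: "'b::{real_normed_field,banach,second_countable_topology} itself \<Rightarrow> 'a measure \<Rightarrow> real \<Rightarrow> 'a set \<Rightarrow> bool" where
  "LpNull B M p A \<longleftrightarrow> (\<forall>f\<in>Lp_space B M p. AE x in M. x \<in> A \<longrightarrow> f x = 0)"

lemma LpNull_null:
  assumes N: "LpNull B M p A" and phi: "\<phi> \<in> Lp_space B M p" and E: "E \<in> sets M" and EA: "E \<subseteq> A"
    and nz: "\<forall>x\<in>E. \<phi> x \<noteq> 0"
  shows "E \<in> null_sets M"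
proof -
  have "AE x in M. x \<in> A \<longrightarrow> \<phi> x = 0" using N phi by (simp add: LpNull_def)
  hence "AE x in M. x \<notin> E" using EA nz by (auto elim: eventually_mono)
  thus ?thesis using AE_iff_null_sets[OF E] by simp
qed

lemma atom_const:
  fixes B :: "'b::{real_normed_field,banach,second_countable_topology} itself"
  assumes D: "D \<in> sets M"
    and atomic: "\<forall>E\<in>sets M. E \<subseteq> D \<longrightarrow> LpNull B M p E \<or> LpNull B M p (D - E)"
    and phi: "\<phi> \<in> Lp_space B M p" and phinz: "\<not> (AE x in M. x \<in> D \<longrightarrow> \<phi> x = 0)"
    and g: "g \<in> Lp_space B M p"
  shows "\<exists>c. AE x in M. x \<in> D \<longrightarrow> g x = c * \<phi> x"
proof -
  have phim: "\<phi> \<in> borel_measurable M" and gm: "g \<in> borel_measurable M"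
    using phi g by (auto simp: Lp_space_def)
  define S0 where "S0 = {x \<in> space M. x \<in> D \<and> \<phi> x \<noteq> 0}"
  have S0: "S0 \<in> sets M" unfolding S0_def using D phim by measurable
  have S0D: "S0 \<subseteq> D" by (auto simp: S0_def)
  have "\<not> LpNull B M p S0"
  proof
    assume "LpNull B M p S0"
    hence "AE x in M. x \<in> S0 \<longrightarrow> \<phi> x = 0" using phi by (simp add: LpNull_def)
    hence "AE x in M. x \<in> D \<longrightarrow> \<phi> x = 0" using AE_space by eventually_elim (auto simp: S0_def)
    thus False using phinz by simp
  qed
  hence "LpNull B M p (D - S0)" using atomic S0 S0D by blast
  hence g0: "AE x in M. x \<in> D - S0 \<longrightarrow> g x = 0" using g by (simp add: LpNull_def)
  define h where "h x = g x / \<phi> x" for x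
  have hm: "h \<in> borel_measurable M" unfolding h_def using gm phim by measurable
  have "\<exists>c. AE x in M. x \<in> S0 \<longrightarrow> h x = c"
  proof (rule ae_const[OF hm S0])
    fix y :: 'b and r :: real assume r: "r > 0"
    define E where "E = {x \<in> S0. h x \<in> ball y r}"
    have S0sp: "S0 \<subseteq> space M" by (auto simp: S0_def)
    have Eeq: "E = S0 \<inter> (h -` ball y r \<inter> space M)" using S0sp by (auto simp: E_def)
    have E: "E \<in> sets M" unfolding Eeq
      by (intro sets.Int S0 measurable_sets[OF hm]) auto
    have ED: "E \<subseteq> D" using S0D by (auto simp: E_def)
    from atomic E ED have "LpNull B M p E \<or> LpNull B M p (D - E)" by blast
    thus "{x \<in> S0. h x \<in> ball y r} \<in> null_sets M \<or> {x \<in> S0. h x \<notin> ball y r} \<in> null_sets M"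
    proof
      assume "LpNull B M p E"
      hence "E \<in> null_sets M" by (rule LpNull_null[OF _ phi E subset_refl]) (auto simp: E_def S0_def)
      thus ?thesis by (simp add: E_def)
    next
      assume N: "LpNull B M p (D - E)"
      have "{x \<in> S0. h x \<notin> ball y r} = S0 - E" by (auto simp: E_def)
      hence E2: "{x \<in> S0. h x \<notin> ball y r} \<in> sets M" using S0 E by auto
      have "{x \<in> S0. h x \<notin> ball y r} \<in> null_sets M"
        by (rule LpNull_null[OF N phi E2]) (auto simp: E_def S0_def)
      thus ?thesis by simp
    qed
  qed
  then obtain c where c: "AE x in M. x \<in> S0 \<longrightarrow> h x = c" by blast
  show ?thesis
  proof (intro exI[of _ c])
    show "AE x in M. x \<in> D \<longrightarrow> g x = c * \<phi> x"
      using c g0 AE_space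
    proof (eventually_elim, intro impI)
      fix x assume c1: "x \<in> S0 \<longrightarrow> h x = c" and g1: "x \<in> D - S0 \<longrightarrow> g x = 0" and x: "x \<in> space M"
        and xD: "x \<in> D"
      show "g x = c * \<phi> x"
      proof (cases "\<phi> x = 0")
        case True
        hence "x \<notin> S0" by (simp add: S0_def)
        thus ?thesis using g1 xD True by simp
      next
        case False
        hence "x \<in> S0" using x xD by (simp add: S0_def)
        hence "c = g x / \<phi> x" using c1 by (simp add: h_def)
        thus ?thesis using False by simp
      qed
    qed
  qed
qed

definition nnfam :: "'b::{real_normed_field,banach,second_countable_topology} itself \<Rightarrow> 'a measure \<Rightarrow> real \<Rightarrow> nat \<Rightarrow> (nat \<Rightarrow> 'a set) \<Rightarrow> bool" where
  "nnfam B M p k D \<longleftrightarrow> (\<forall>i<k. D i \<in> sets M \<and> \<not> LpNull B M p (D i)) \<and> (\<forall>i<k. \<forall>j<k. i \<noteq> j \<longrightarrow> D i \<inter> D j = {})"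

lemma nnfam_all:
  fixes B :: "'b::{real_normed_field,banach,second_countable_topology} itself"
  assumes inf: "Lp_infinite_dim B M p"
  shows "\<exists>D. nnfam B M p k D"
proof (rule ccontr)
  assume nk: "\<not> ?thesis"
  define m where "m = (LEAST k. \<not> (\<exists>D. nnfam B M p k D))"
  have m1: "\<not> (\<exists>D. nnfam B M p m D)" unfolding m_def using nk by (rule LeastI)
  have m0: "m \<noteq> 0"
  proof
    assume "m = 0"
    moreover have "nnfam B M p 0 (\<lambda>_. {})" by (simp add: nnfam_def)
    ultimately show False using m1 by blast
  qed
  then obtain K where mK: "m = Suc K" by (cases m) auto
  have "\<exists>D. nnfam B M p K D"
  proof (rule ccontr)
    assume "\<not> (\<exists>D. nnfam B M p K D)"
    hence "m \<le> K" unfolding m_def by (rule Least_le)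
    thus False using mK by simp
  qed
  then obtain D where D: "nnfam B M p K D" by blast
  have noext: "\<not> nnfam B M p (Suc K) D'" for D' using m1 mK by blast
  have Ds: "\<forall>i<K. D i \<in> sets M" and Dn: "\<forall>i<K. \<not> LpNull B M p (D i)"
    and Dd: "\<forall>i<K. \<forall>j<K. i \<noteq> j \<longrightarrow> D i \<inter> D j = {}"
    using D by (auto simp: nnfam_def)
  define C where "C = space M - (\<Union>i<K. D i)"
  have Cs: "C \<in> sets M" unfolding C_def using Ds by (intro sets.Diff sets.top sets.finite_UN) auto
  have CN: "LpNull B M p C"
  proof (rule ccontr)
    assume nC: "\<not> LpNull B M p C"
    have "nnfam B M p (Suc K) (D(K := C))"
      unfolding nnfam_def
    proof (rule conjI; intro allI impI)
      fix i assume "i < Suc K"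
      thus "(D(K := C)) i \<in> sets M \<and> \<not> LpNull B M p ((D(K := C)) i)"
        using Ds Dn Cs nC by (cases "i = K") auto
    next
      fix i j assume i: "i < Suc K" and j: "j < Suc K" and ij: "i \<noteq> j"
      show "(D(K := C)) i \<inter> (D(K := C)) j = {}"
        using Dd i j ij by (cases "i = K"; cases "j = K") (auto simp: C_def)
    qed
    thus False using noext by blast
  qed
  have atomic: "\<forall>E\<in>sets M. E \<subseteq> D i \<longrightarrow> LpNull B M p E \<or> LpNull B M p (D i - E)" if i: "i < K" for i
  proof (intro ballI impI, rule ccontr)
    fix E assume E: "E \<in> sets M" and ED: "E \<subseteq> D i" and nE: "\<not> (LpNull B M p E \<or> LpNull B M p (D i - E))"
    have "nnfam B M p (Suc K) ((D(i := E))(K := D i - E))"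
      unfolding nnfam_def
    proof (rule conjI; intro allI impI)
      fix j assume "j < Suc K"
      thus "((D(i := E))(K := D i - E)) j \<in> sets M \<and> \<not> LpNull B M p (((D(i := E))(K := D i - E)) j)"
        using Ds Dn E nE i by (cases "j = K"; cases "j = i") auto
    next
      fix j l assume j: "j < Suc K" and l: "l < Suc K" and jl: "j \<noteq> l"
      show "((D(i := E))(K := D i - E)) j \<inter> ((D(i := E))(K := D i - E)) l = {}"
      proof -
        have Dd': "\<And>a b x. a < K \<Longrightarrow> b < K \<Longrightarrow> a \<noteq> b \<Longrightarrow> x \<in> D a \<Longrightarrow> x \<in> D b \<Longrightarrow> False"
          using Dd by blast
        show ?thesis
          using j l jl i ED by (cases "j = K"; cases "l = K"; cases "j = i"; cases "l = i") (auto simp: less_Suc_eq dest: Dd')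
      qed
    qed
    thus False using noext by blast
  qed
  have "\<forall>i<K. \<exists>\<phi>. \<phi> \<in> Lp_space B M p \<and> \<not> (AE x in M. x \<in> D i \<longrightarrow> \<phi> x = 0)"
    using Dn by (auto simp: LpNull_def)
  then obtain \<phi> where \<phi>: "\<forall>i<K. \<phi> i \<in> Lp_space B M p \<and> \<not> (AE x in M. x \<in> D i \<longrightarrow> \<phi> i x = 0)" by metis
  define \<psi> where "\<psi> i x = (if x \<in> D i then \<phi> i x else 0)" for i x
  have repr: "\<exists>c. AE x in M. g x = (\<Sum>i<K. c i * \<psi> i x)" if g: "g \<in> Lp_space B M p" for g
  proof -
    have "\<forall>i<K. \<exists>ci. AE x in M. x \<in> D i \<longrightarrow> g x = ci * \<phi> i x"
      using atom_const[OF _ atomic _ _ g] Ds \<phi> by blast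
    then obtain c where c: "\<forall>i<K. AE x in M. x \<in> D i \<longrightarrow> g x = c i * \<phi> i x" by metis
    have A1: "AE x in M. \<forall>i\<in>{..<K}. x \<in> D i \<longrightarrow> g x = c i * \<phi> i x"
      using c by (intro AE_finite_allI) auto
    have A2: "AE x in M. x \<in> C \<longrightarrow> g x = 0" using CN g by (simp add: LpNull_def)
    have "AE x in M. g x = (\<Sum>i<K. c i * \<psi> i x)"
      using A1 A2 AE_space
    proof eventually_elim
      case (elim x)
      show ?case
      proof (cases "\<exists>i<K. x \<in> D i")
        case True
        then obtain i where i: "i < K" "x \<in> D i" by auto
        have "(\<Sum>j<K. c j * \<psi> j x) = c i * \<psi> i x + (\<Sum>j\<in>{..<K} - {i}. c j * \<psi> j x)"
          using i by (subst sum.remove[OF finite_lessThan, of i]) auto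
        also have "(\<Sum>j\<in>{..<K} - {i}. c j * \<psi> j x) = 0"
          using Dd i by (intro sum.neutral) (auto simp: \<psi>_def)
        finally show ?thesis using elim i by (simp add: \<psi>_def)
      next
        case False
        hence "x \<in> C" using elim by (auto simp: C_def)
        moreover have "(\<Sum>j<K. c j * \<psi> j x) = 0" using False by (intro sum.neutral) (auto simp: \<psi>_def)
        ultimately show ?thesis using elim by simp
      qed
    qed
    thus ?thesis by blast
  qed
  obtain f where f: "\<forall>i<Suc K. f i \<in> Lp_space B M p"
    and indep: "\<forall>c :: nat \<Rightarrow> 'b. (AE x in M. (\<Sum>i<Suc K. c i * f i x) = 0) \<longrightarrow> (\<forall>i<Suc K. c i = 0)"
    using inf unfolding Lp_infinite_dim_def by blast
  have "\<forall>m<Suc K. \<exists>c. AE x in M. f m x = (\<Sum>i<K. c i * \<psi> i x)" using repr f by blast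
  then obtain cc where cc: "\<forall>m<Suc K. AE x in M. f m x = (\<Sum>i<K. cc m i * \<psi> i x)" by metis
  obtain d where d: "\<exists>m\<in>{..<Suc K}. d m \<noteq> 0" "\<forall>i<K. (\<Sum>m\<in>{..<Suc K}. d m * cc m i) = 0"
    using LA[of "{..<Suc K}" K cc] by auto
  have "AE x in M. \<forall>m\<in>{..<Suc K}. f m x = (\<Sum>i<K. cc m i * \<psi> i x)"
    using cc by (intro AE_finite_allI) auto
  hence "AE x in M. (\<Sum>m<Suc K. d m * f m x) = 0"
  proof eventually_elim
    case (elim x)
    have "(\<Sum>m<Suc K. d m * f m x) = (\<Sum>m<Suc K. d m * (\<Sum>i<K. cc m i * \<psi> i x))"
      using elim by simp
    also have "\<dots> = (\<Sum>m<Suc K. \<Sum>i<K. d m * cc m i * \<psi> i x)"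
      by (simp add: sum_distrib_left mult.assoc)
    also have "\<dots> = (\<Sum>i<K. \<Sum>m<Suc K. d m * cc m i * \<psi> i x)"
      by (rule sum.swap)
    also have "\<dots> = (\<Sum>i<K. (\<Sum>m<Suc K. d m * cc m i) * \<psi> i x)"
      by (simp only: sum_distrib_right)
    also have "\<dots> = 0" using d(2) by simp
    finally show ?case .
  qed
  hence "\<forall>i<Suc K. d i = 0" using indep by blast
  thus False using d(1) by auto
qed

lemma normalize:
  fixes B :: "'b::{real_normed_field,banach,second_countable_topology} itself"
  assumes p: "0 < p" and A: "A \<in> sets M" and f: "f \<in> Lp_space B M p"
    and nz: "\<not> (AE x in M. x \<in> A \<longrightarrow> f x = 0)"
  shows "\<exists>w. w \<in> Lp_sphere B M p \<and> (\<forall>x\<in>space M. x \<notin> A \<longrightarrow> w x = 0)"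
proof -
  have fm: "f \<in> borel_measurable M" and fi: "integrable M (\<lambda>x. norm (f x) powr p)"
    using f by (auto simp: Lp_space_def)
  define v where "v x = (if x \<in> A then f x else 0)" for x
  have vm: "v \<in> borel_measurable M" unfolding v_def
    using A fm by (intro measurable_If_set) auto
  have vn: "norm (v x) powr p = indicator A x * norm (f x) powr p" for x
    using p by (auto simp: v_def indicator_def)
  have vi: "integrable M (\<lambda>x. norm (v x) powr p)"
    unfolding vn using A fi by (rule integrable_ind)
  have vL: "v \<in> Lp_space B M p" using vm vi by (simp add: Lp_space_def)
  have PNpos: "PN M p v > 0"
  proof (rule ccontr)
    assume "\<not> ?thesis"
    hence "PN M p v = 0" using PN_nonneg[of M p v] by simp
    hence "AE x in M. norm (v x) powr p = 0"
      using integral_nonneg_eq_0_iff_AE[OF vi] by (simp add: PN_def)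
    hence "AE x in M. x \<in> A \<longrightarrow> f x = 0" by eventually_elim (auto simp: v_def)
    thus False using nz by simp
  qed
  define s where "s = PN M p v powr (- 1 / p)"
  have s0: "s \<ge> 0" by (simp add: s_def)
  have sp: "s powr p = 1 / PN M p v"
  proof -
    have "s powr p = PN M p v powr (- 1 / p * p)" by (simp only: s_def powr_powr)
    also have "- 1 / p * p = - 1" using p by simp
    also have "PN M p v powr (- 1) = inverse (PN M p v powr 1)" by (rule powr_minus)
    also have "PN M p v powr 1 = PN M p v" using PNpos by simp
    finally show ?thesis by (simp add: divide_inverse)
  qed
  define w where "w x = of_real s * v x" for x
  have wm: "w \<in> borel_measurable M" unfolding w_def using vm by measurable
  have wn: "norm (w x) powr p = s powr p * norm (v x) powr p" for x
    using s0 by (simp add: w_def norm_mult powr_mult)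
  have wi: "integrable M (\<lambda>x. norm (w x) powr p)" unfolding wn using vi by simp
  have wL: "w \<in> Lp_space B M p" using wm wi by (simp add: Lp_space_def)
  have "PN M p w = s powr p * PN M p v" unfolding PN_def wn by simp
  also have "\<dots> = 1" using sp PNpos by simp
  finally have "PN M p w = 1" .
  hence "w \<in> Lp_sphere B M p" using wL sphere_iff[OF p] by blast
  moreover have "\<forall>x\<in>space M. x \<notin> A \<longrightarrow> w x = 0" by (simp add: w_def v_def)
  ultimately show ?thesis by blast
qed

lemma fam_exists:
  fixes B :: "'b::{real_normed_field,banach,second_countable_topology} itself"
  assumes p: "0 < p" and inf: "Lp_infinite_dim B M p"
  shows "\<forall>N. \<exists>w A. disj_fam B M p N w A"
proof
  fix N
  obtain D where D: "nnfam B M p N D" using nnfam_all[OF inf] by blast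
  have "\<forall>i<N. \<exists>w. w \<in> Lp_sphere B M p \<and> (\<forall>x\<in>space M. x \<notin> D i \<longrightarrow> w x = 0)"
  proof (intro allI impI)
    fix i assume i: "i < N"
    have Di: "D i \<in> sets M" "\<not> LpNull B M p (D i)" using D i by (auto simp: nnfam_def)
    then obtain f where "f \<in> Lp_space B M p" "\<not> (AE x in M. x \<in> D i \<longrightarrow> f x = 0)"
      by (auto simp: LpNull_def)
    thus "\<exists>w. w \<in> Lp_sphere B M p \<and> (\<forall>x\<in>space M. x \<notin> D i \<longrightarrow> w x = 0)"
      using normalize[OF p Di(1)] by blast
  qed
  then obtain w where w: "\<forall>i<N. w i \<in> Lp_sphere B M p \<and> (\<forall>x\<in>space M. x \<notin> D i \<longrightarrow> w i x = 0)" by metis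
  have "disj_fam B M p N w D"
    unfolding disj_fam_def using p w D by (auto simp: nnfam_def)
  thus "\<exists>w A. disj_fam B M p N w A" by blast
qed

theorem theorem4p1:
  fixes M :: "'a measure" and p :: real
  assumes "0 < p"
    and "Lp_infinite_dim TYPE('b::{real_normed_field,banach,second_countable_topology}) M p"
  shows "average_set TYPE('b) M p = {2 powr (1 / p)}
         \<and> rendezvous_set TYPE('b) M p = {2 powr (1 / p)}"
  using average[OF assms(1) fam_exists[OF assms]] rendezvous[OF assms(1) fam_exists[OF assms]] by simp

end
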